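(* Let $(V,g,J)$ be a pseudo-hermitian vector space, $A:V\to V$ a hermitian endomorphism, $p$ a polynomial with real coefficients and $B=p(A)$. Suppose a linear operator $R:\mathfrak{u}(g,J)\to\mathfrak{u}(g,J)$ satisfies $[R(X),A]=[X,B]$ for all $X\in\mathfrak{u}(g,J)$. Then: (1) for any real eigenvalues $\lambda_i\neq\lambda_j$ of $A$, the number $\frac{p(\lambda_i)-p(\lambda_j)}{\lambda_i-\lambda_j}$ is an eigenvalue of $R$; (2) if $A$ has a non-trivial Jordan block with real eigenvalue $\lambda_i$, then $p'(\lambda_i)$ is an eigenvalue of $R$.
   Context: A pseudo-hermitian vector space $(V,g,J)$ is a real vector space with a complex structure $J$ and a non-degenerate inner product $g$ (any signature) with $g(Ju,Jv)=g(u,v)$. An endomorphism is hermitian if it is $g$-selfadjoint and commutes with $J$. $\mathfrak{u}(g,J)=\{X\in\mathfrak{gl}(V):[X,J]=0,\ g(Xu,v)=-g(u,Xv)\}$. *)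

theory Defs
  imports "Jordan_Normal_Form.Jordan_Normal_Form" "Jordan_Normal_Form.Char_Poly"
begin

text \<open>A pseudo-hermitian vector space of real dimension n, in coordinates:
  V = R^n, the inner product g(u,v) = u^T G v with G symmetric and invertible
  (any signature), the complex structure J with J^2 = -1, and g(Ju,Jv) = g(u,v).\<close>
definition pseudo_hermitian :: "nat \<Rightarrow> real mat \<Rightarrow> real mat \<Rightarrow> bool" where
  "pseudo_hermitian n G J \<longleftrightarrow>
     G \<in> carrier_mat n n \<and> J \<in> carrier_mat n n \<and>
     transpose_mat G = G \<and> det G \<noteq> 0 \<and>
     J * J = - (1\<^sub>m n) \<and>
     transpose_mat J * G * J = G"

definition hermitian_endo :: "nat \<Rightarrow> real mat \<Rightarrow> real mat \<Rightarrow> real mat \<Rightarrow> bool" where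
  "hermitian_endo n G J A \<longleftrightarrow>
     A \<in> carrier_mat n n \<and> transpose_mat A * G = G * A \<and> A * J = J * A"

definition u_alg :: "nat \<Rightarrow> real mat \<Rightarrow> real mat \<Rightarrow> real mat set" where
  "u_alg n G J = {X \<in> carrier_mat n n. X * J = J * X \<and> transpose_mat X * G = - (G * X)}"

definition commutator :: "'a::comm_ring_1 mat \<Rightarrow> 'a mat \<Rightarrow> 'a mat" where
  "commutator X Y = X * Y - Y * X"

definition poly_mat :: "nat \<Rightarrow> 'a::comm_ring_1 poly \<Rightarrow> 'a mat \<Rightarrow> 'a mat" where
  "poly_mat n p A = foldr (\<lambda>c M. c \<cdot>\<^sub>m 1\<^sub>m n + A * M) (coeffs p) (0\<^sub>m n n)"

definition linear_on :: "real mat set \<Rightarrow> (real mat \<Rightarrow> real mat) \<Rightarrow> bool" where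
  "linear_on U R \<longleftrightarrow> (\<forall>X\<in>U. R X \<in> U) \<and>
     (\<forall>X\<in>U. \<forall>Y\<in>U. \<forall>a b. R (a \<cdot>\<^sub>m X + b \<cdot>\<^sub>m Y) = a \<cdot>\<^sub>m R X + b \<cdot>\<^sub>m R Y)"

definition op_eigenvalue :: "nat \<Rightarrow> real mat set \<Rightarrow> (real mat \<Rightarrow> real mat) \<Rightarrow> real \<Rightarrow> bool" where
  "op_eigenvalue n U R mu \<longleftrightarrow> (\<exists>X\<in>U. X \<noteq> 0\<^sub>m n n \<and> R X = mu \<cdot>\<^sub>m X)"

definition has_nontrivial_jordan_block :: "real mat \<Rightarrow> real \<Rightarrow> bool" where
  "has_nontrivial_jordan_block A lam \<longleftrightarrow>
     (\<exists>n_as. jordan_nf (map_mat complex_of_real A) n_as \<and>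
        (\<exists>k. (k, complex_of_real lam) \<in> set n_as \<and> k \<ge> 2))"

end

theory Submission
  imports Defs "HOL-Library.Function_Algebras" "Jordan_Normal_Form.Jordan_Normal_Form_Uniqueness"
begin

context vector_space begin

lemma lin_sum_on:
  assumes S: "subspace S"
    and add: "\<forall>x\<in>S. \<forall>y\<in>S. f (x + y) = f x + f y"
    and sc: "\<forall>x\<in>S. \<forall>c. f (c *s x) = c *s (f x)"
    and f0: "f 0 = 0"
  shows "finite F \<Longrightarrow> F \<subseteq> S \<Longrightarrow> f (\<Sum>x\<in>F. c x *s x) = (\<Sum>x\<in>F. c x *s f x)"
proof (induction F rule: finite_induct)
  case empty then show ?case using f0 by simp
next
  case (insert a F)
  have a: "a \<in> S" using insert by auto
  have s: "(\<Sum>x\<in>F. c x *s x) \<in> S" using insert S by (intro subspace_sum) (auto intro: subspace_scale)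
  have "f (\<Sum>x\<in>insert a F. c x *s x) = f (c a *s a + (\<Sum>x\<in>F. c x *s x))"
    using insert by simp
  also have "\<dots> = c a *s f a + f (\<Sum>x\<in>F. c x *s x)"
    using add sc a s S subspace_scale by metis
  also have "\<dots> = (\<Sum>x\<in>insert a F. c x *s f x)" using insert by simp
  finally show ?case .
qed

lemma inj_on_subspace_surj:
  assumes S: "subspace S" and E: "finite E" "S \<subseteq> span E"
    and fS: "\<forall>x\<in>S. f x \<in> S"
    and add: "\<forall>x\<in>S. \<forall>y\<in>S. f (x + y) = f x + f y"
    and sc: "\<forall>x\<in>S. \<forall>c. f (c *s x) = c *s (f x)"
    and inj: "inj_on f S"
  shows "f ` S = S"
proof -
  have z: "0 \<in> S" using S by (rule subspace_0)
  have f0: "f 0 = 0" using sc z by (metis scale_zero_left)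
  note ls = lin_sum_on[OF S add sc f0]
  obtain B where B: "B \<subseteq> S" "independent B" "S \<subseteq> span B"
    by (rule maximal_independent_subset[of S])
  have Bfin: "finite B" "card B \<le> card E"
    using independent_span_bound[OF E(1) B(2)] B E by auto
  have spanfB: "span (f ` B) \<subseteq> f ` S"
  proof
    fix y assume "y \<in> span (f ` B)"
    then have "y \<in> {(\<Sum>a\<in>t. r a *s  a) | t r. finite t \<and> t \<subseteq> f ` B}" by (simp only: span_explicit)
    then obtain t r where t: "finite t" "t \<subseteq> f ` B" "y = (\<Sum>a\<in>t. r a *s a)"
      by blast
    obtain t0 where t0: "t0 \<subseteq> B" "t = f ` t0"
      using subset_imageE[OF t(2)] by metis
    have it0: "inj_on f t0" using inj t0 B by (meson inj_on_subset order_trans)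
    have ft0: "finite t0" using t0 Bfin finite_subset by blast
    have "y = (\<Sum>x\<in>t0. r (f x) *s f x)" using t t0 it0 by (simp add: sum.reindex)
    also have "\<dots> = f (\<Sum>x\<in>t0. r (f x) *s x)" using ls[OF ft0] t0 B by auto
    finally have "y = f (\<Sum>x\<in>t0. r (f x) *s x)" .
    moreover have "(\<Sum>x\<in>t0. r (f x) *s x) \<in> S"
      using S t0 B by (intro subspace_sum) (auto intro: subspace_scale)
    ultimately show "y \<in> f ` S" by blast
  qed
  have indep: "independent (f ` B)"
    unfolding independent_explicit_finite_subsets
  proof (intro allI impI ballI)
    fix t u v assume t: "t \<subseteq> f ` B" "finite t" and su: "(\<Sum>v\<in>t. u v *s v) = 0" and v: "v \<in> t"
    obtain t0 where t0: "t0 \<subseteq> B" "t = f ` t0"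
      using subset_imageE[OF t(1)] by metis
    have it0: "inj_on f t0" using inj t0 B by (meson inj_on_subset order_trans)
    have ft0: "finite t0" using t0 Bfin finite_subset by blast
    have "f (\<Sum>x\<in>t0. u (f x) *s x) = (\<Sum>x\<in>t0. u (f x) *s f x)" using ls[OF ft0] t0 B by auto
    also have "\<dots> = 0" using su t0 it0 by (simp add: sum.reindex)
    finally have "f (\<Sum>x\<in>t0. u (f x) *s x) = f 0" using f0 by simp
    moreover have "(\<Sum>x\<in>t0. u (f x) *s x) \<in> S"
      using S t0 B by (intro subspace_sum) (auto intro: subspace_scale)
    ultimately have Z: "(\<Sum>x\<in>t0. u (f x) *s x) = 0" using inj z by (meson inj_onD)
    have IND: "\<forall>S\<subseteq>B. finite S \<longrightarrow> (\<forall>u. (\<Sum>v\<in>S. u v *s v) = 0 \<longrightarrow> (\<forall>v\<in>S. u v = 0))"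
      using B(2) by (simp only: independent_explicit_finite_subsets)
    have U: "u (f x) = 0" if "x \<in> t0" for x
      using IND[rule_format, OF t0(1) ft0 Z that] by simp
    from v t0(2) obtain x where "x \<in> t0" "v = f x" by blast
    then show "u v = 0" using U by simp
  qed
  have "S \<subseteq> f ` S"
  proof
    fix w assume w: "w \<in> S"
    show "w \<in> f ` S"
    proof (rule ccontr)
      assume nw: "w \<notin> f ` S"
      then have nsp: "w \<notin> span (f ` B)" using spanfB by blast
      have i2: "independent (insert w (f ` B))" using independent_insertI[OF nsp indep] .
      have "f ` B \<subseteq> S" using B fS by blast
      then have "insert w (f ` B) \<subseteq> S" using w by blast
      then have "insert w (f ` B) \<subseteq> span B" using B(3) by (rule order_trans)
      then have "card (insert w (f ` B)) \<le> card B"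
        using independent_span_bound[OF Bfin(1) i2] by auto
      moreover have "card (f ` B) = card B"
        using inj_on_subset[OF inj B(1)] by (rule card_image)
      moreover have "w \<notin> f ` B" using nsp span_superset[of "f ` B"] by blast
      ultimately show False using Bfin by simp
    qed
  qed
  then show ?thesis using fS by blast
qed

end

interpretation fvs: vector_space "\<lambda>(c::real) (f::nat\<times>nat\<Rightarrow>real). (\<lambda>x. c * f x)"
  by unfold_locales (auto simp: fun_eq_iff algebra_simps)

lemma sum_fun_apply': "(sum g A) x = (\<Sum>a\<in>A. g a x)"
  by (induction A rule: infinite_finite_induct) auto

definition enc :: "nat \<Rightarrow> real mat \<Rightarrow> nat \<times> nat \<Rightarrow> real" where
  "enc n X = (\<lambda>(i,j). if i < n \<and> j < n then X $$ (i,j) else 0)"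

definition dec :: "nat \<Rightarrow> (nat \<times> nat \<Rightarrow> real) \<Rightarrow> real mat" where
  "dec n f = mat n n (\<lambda>(i,j). f (i,j))"

lemma dec_enc: "X \<in> carrier_mat n n \<Longrightarrow> dec n (enc n X) = X"
  unfolding dec_def enc_def by (intro eq_matI) auto

lemma enc_inj: "X \<in> carrier_mat n n \<Longrightarrow> Y \<in> carrier_mat n n \<Longrightarrow> enc n X = enc n Y \<Longrightarrow> X = Y"
proof -
  assume a: "X \<in> carrier_mat n n" "Y \<in> carrier_mat n n" "enc n X = enc n Y"
  have "dec n (enc n X) = dec n (enc n Y)" using a(3) by simp
  then show "X = Y" using dec_enc[OF a(1)] dec_enc[OF a(2)] by simp
qed

lemma enc_add: "X \<in> carrier_mat n n \<Longrightarrow> Y \<in> carrier_mat n n \<Longrightarrow> enc n (X + Y) = enc n X + enc n Y"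
  unfolding enc_def by (auto simp: fun_eq_iff)

lemma enc_smult: "X \<in> carrier_mat n n \<Longrightarrow> enc n (c \<cdot>\<^sub>m X) = (\<lambda>x. c * enc n X x)"
  unfolding enc_def by (auto simp: fun_eq_iff)

lemma enc_zero: "enc n (0\<^sub>m n n) = 0"
  unfolding enc_def by (auto simp: fun_eq_iff)

lemma enc_span: "X \<in> carrier_mat n n \<Longrightarrow>
   enc n X \<in> fvs.span ((\<lambda>p q. if q = p then 1 else 0) ` ({..<n} \<times> {..<n}))"
proof -
  assume X: "X \<in> carrier_mat n n"
  let ?B = "{..<n} \<times> {..<n}"
  let ?E = "(\<lambda>p q. if q = p then (1::real) else 0) ` ?B"
  have eq: "enc n X = (\<Sum>p\<in>?B. (\<lambda>q. X $$ p * (if q = p then 1 else 0)))"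
  proof
    fix q
    have "(\<Sum>p\<in>?B. (\<lambda>q. X $$ p * (if q = p then 1 else 0))) q
        = (\<Sum>p\<in>?B. X $$ p * (if q = p then 1 else 0))" by (rule sum_fun_apply')
    also have "\<dots> = (\<Sum>p\<in>?B. if q = p then X $$ q else 0)" by (rule sum.cong) auto
    also have "\<dots> = (if q \<in> ?B then X $$ q else 0)" by (simp add: sum.delta')
    also have "\<dots> = enc n X q" by (cases q) (simp add: enc_def)
    finally show "enc n X q = (\<Sum>p\<in>?B. (\<lambda>q. X $$ p * (if q = p then 1 else 0))) q" by (rule sym)
  qed
  have "(\<Sum>p\<in>?B. (\<lambda>q. X $$ p * (if q = p then 1 else 0))) \<in> fvs.span ?E"
  proof (rule fvs.span_sum)
    fix p assume p: "p \<in> ?B"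
    have "(\<lambda>q. if q = p then (1::real) else 0) \<in> ?E" using p by (rule imageI)
    then have "(\<lambda>q. if q = p then (1::real) else 0) \<in> fvs.span ?E" by (rule fvs.span_base)
    from fvs.span_scale[OF this, of "X $$ p"]
    show "(\<lambda>q. X $$ p * (if q = p then 1 else 0)) \<in> fvs.span ?E" .
  qed
  then show ?thesis unfolding eq .
qed

lemma mat_inj_surj:
  fixes T :: "real mat \<Rightarrow> real mat" and W :: "real mat set"
  assumes W: "W \<subseteq> carrier_mat n n" and W0: "0\<^sub>m n n \<in> W"
    and Wadd: "\<forall>X\<in>W. \<forall>Y\<in>W. X + Y \<in> W" and Wsc: "\<forall>X\<in>W. \<forall>c. c \<cdot>\<^sub>m X \<in> W"
    and TW: "\<forall>X\<in>W. T X \<in> W" and Tadd: "\<forall>X\<in>W. \<forall>Y\<in>W. T (X + Y) = T X + T Y"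
    and Tsc: "\<forall>X\<in>W. \<forall>c. T (c \<cdot>\<^sub>m X) = c \<cdot>\<^sub>m T X"
    and inj: "inj_on T W"
  shows "T ` W = W"
proof -
  let ?S = "enc n ` W"
  let ?f = "\<lambda>x. enc n (T (dec n x))"
  let ?E = "(\<lambda>p q. if q = p then (1::real) else 0) ` ({..<n} \<times> {..<n})"
  have de: "\<And>X. X \<in> W \<Longrightarrow> dec n (enc n X) = X" using W dec_enc by blast
  have sub: "fvs.subspace ?S"
    unfolding fvs.subspace_def
  proof (intro conjI ballI allI)
    have "enc n (0\<^sub>m n n) \<in> ?S" using W0 by (rule imageI)
    then show "0 \<in> ?S" by (simp add: enc_zero)
  next
    fix x y assume "x \<in> ?S" "y \<in> ?S"
    then obtain X Y where "X \<in> W" "Y \<in> W" "x = enc n X" "y = enc n Y" by blast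
    moreover have "X \<in> carrier_mat n n" "Y \<in> carrier_mat n n" using \<open>X \<in> W\<close> \<open>Y \<in> W\<close> W by blast+
    ultimately have "x + y = enc n (X + Y)" using enc_add by simp
    moreover have "enc n (X + Y) \<in> ?S" using \<open>X \<in> W\<close> \<open>Y \<in> W\<close> Wadd by blast
    ultimately show "x + y \<in> ?S" by simp
  next
    fix c x assume "x \<in> ?S"
    then obtain X where "X \<in> W" "x = enc n X" by blast
    moreover have "X \<in> carrier_mat n n" using \<open>X \<in> W\<close> W by blast
    ultimately have "(\<lambda>q. c * x q) = enc n (c \<cdot>\<^sub>m X)" using enc_smult by simp
    moreover have "enc n (c \<cdot>\<^sub>m X) \<in> ?S" using \<open>X \<in> W\<close> Wsc by blast
    ultimately show "(\<lambda>q. c * x q) \<in> ?S" by simp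
  qed
  have sp: "?S \<subseteq> fvs.span ?E" using W enc_span by blast
  have fS: "\<forall>x\<in>?S. ?f x \<in> ?S" using TW de by auto
  have fadd: "\<forall>x\<in>?S. \<forall>y\<in>?S. ?f (x + y) = ?f x + ?f y"
  proof (intro ballI)
    fix x y assume "x \<in> ?S" "y \<in> ?S"
    then obtain X Y where XY: "X \<in> W" "Y \<in> W" "x = enc n X" "y = enc n Y" by blast
    have C: "X \<in> carrier_mat n n" "Y \<in> carrier_mat n n" "T X \<in> carrier_mat n n" "T Y \<in> carrier_mat n n"
      using XY W TW by blast+
    have XYW: "X + Y \<in> W" using XY Wadd by blast
    have "x + y = enc n (X + Y)" using XY C enc_add by simp
    then have "?f (x + y) = enc n (T (X + Y))" using de[OF XYW] by simp
    also have "\<dots> = enc n (T X + T Y)" using Tadd XY by simp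
    also have "\<dots> = enc n (T X) + enc n (T Y)" using C enc_add by simp
    also have "\<dots> = ?f x + ?f y" using de XY by simp
    finally show "?f (x + y) = ?f x + ?f y" .
  qed
  have fsc: "\<forall>x\<in>?S. \<forall>c. ?f (\<lambda>q. c * x q) = (\<lambda>q. c * ?f x q)"
  proof (intro ballI allI)
    fix x c assume "x \<in> ?S"
    then obtain X where XY: "X \<in> W" "x = enc n X" by blast
    have C: "X \<in> carrier_mat n n" "T X \<in> carrier_mat n n"
      using XY W TW by blast+
    have XW: "c \<cdot>\<^sub>m X \<in> W" using XY Wsc by blast
    have "(\<lambda>q. c * x q) = enc n (c \<cdot>\<^sub>m X)" using XY C enc_smult by simp
    then have "?f (\<lambda>q. c * x q) = enc n (T (c \<cdot>\<^sub>m X))" using de[OF XW] by simp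
    also have "\<dots> = enc n (c \<cdot>\<^sub>m T X)" using Tsc XY by simp
    also have "\<dots> = (\<lambda>q. c * enc n (T X) q)" using C enc_smult by simp
    also have "\<dots> = (\<lambda>q. c * ?f x q)" using de XY by simp
    finally show "?f (\<lambda>q. c * x q) = (\<lambda>q. c * ?f x q)" .
  qed
  have finj: "inj_on ?f ?S"
  proof (rule inj_onI)
    fix x y assume "x \<in> ?S" "y \<in> ?S" and eq: "?f x = ?f y"
    then obtain X Y where XY: "X \<in> W" "Y \<in> W" "x = enc n X" "y = enc n Y" by blast
    then have "enc n (T X) = enc n (T Y)" using eq de by simp
    then have "T X = T Y" using enc_inj TW XY W by blast
    then show "x = y" using inj XY by (metis inj_onD)
  qed
  have surj: "?f ` ?S = ?S"
    by (rule fvs.inj_on_subspace_surj[OF sub _ sp fS fadd fsc finj]) simp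
  show ?thesis
  proof
    show "T ` W \<subseteq> W" using TW by blast
  next
    show "W \<subseteq> T ` W"
    proof
      fix Y assume Y: "Y \<in> W"
      then have "enc n Y \<in> ?S" by (rule imageI)
      then have "enc n Y \<in> ?f ` ?S" by (simp only: surj)
      then obtain x where x: "x \<in> ?S" "enc n Y = ?f x" by (rule imageE) simp
      then obtain X where X0: "X \<in> W" "x = enc n X" by blast
      then have X: "X \<in> W" "enc n Y = enc n (T X)" using x de by simp_all
      then have "Y = T X" using enc_inj TW W Y by blast
      then show "Y \<in> T ` W" using X by blast
    qed
  qed
qed

lemma sq_mult[simp]: "A \<in> carrier_mat n n \<Longrightarrow> B \<in> carrier_mat n n \<Longrightarrow> A * B \<in> carrier_mat n n"
  by (rule mult_carrier_mat)
lemma sq_mult_vec[simp]: "A \<in> carrier_mat n n \<Longrightarrow> v \<in> carrier_vec n \<Longrightarrow> A *\<^sub>v v \<in> carrier_vec n"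
  by (rule mult_mat_vec_carrier)
lemma sq_minus[simp]: "A \<in> carrier_mat n m \<Longrightarrow> B \<in> carrier_mat n m \<Longrightarrow> A - B \<in> carrier_mat n m"
  by (rule minus_carrier_mat)
lemma sq_add_mult: "A \<in> carrier_mat n n \<Longrightarrow> B \<in> carrier_mat n n \<Longrightarrow> C \<in> carrier_mat n n \<Longrightarrow>
  (A + B) * C = A * C + B * C" by (rule add_mult_distrib_mat)
lemma sq_mult_add: "A \<in> carrier_mat n n \<Longrightarrow> B \<in> carrier_mat n n \<Longrightarrow> C \<in> carrier_mat n n \<Longrightarrow>
  A * (B + C) = A * B + A * C" by (rule mult_add_distrib_mat)
lemma sq_minus_mult: "(A :: real mat) \<in> carrier_mat n n \<Longrightarrow> B \<in> carrier_mat n n \<Longrightarrow> C \<in> carrier_mat n n \<Longrightarrow>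
  (A - B) * C = A * C - B * C" by (rule minus_mult_distrib_mat)
lemma sq_mult_minus: "(A :: real mat) \<in> carrier_mat n n \<Longrightarrow> B \<in> carrier_mat n n \<Longrightarrow> C \<in> carrier_mat n n \<Longrightarrow>
  A * (B - C) = A * B - A * C" by (rule mult_minus_distrib_mat)
lemma sq_assoc: "A \<in> carrier_mat n n \<Longrightarrow> B \<in> carrier_mat n n \<Longrightarrow> C \<in> carrier_mat n n \<Longrightarrow>
  (A * B) * C = A * (B * C)" by (rule assoc_mult_mat)
lemma sq_assoc_vec: "A \<in> carrier_mat n n \<Longrightarrow> B \<in> carrier_mat n n \<Longrightarrow> v \<in> carrier_vec n \<Longrightarrow>
  (A * B) *\<^sub>v v = A *\<^sub>v (B *\<^sub>v v)" by (rule assoc_mult_mat_vec)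

definition K :: "real vec \<Rightarrow> real vec \<Rightarrow> real mat" where
  "K x y = mat (dim_vec y) (dim_vec x) (\<lambda>(i,j). y $ i * x $ j)"

lemma K_carrier[simp]: "x \<in> carrier_vec n \<Longrightarrow> y \<in> carrier_vec n \<Longrightarrow> K x y \<in> carrier_mat n n"
  unfolding K_def by auto

lemma K_index[simp]: "i < dim_vec y \<Longrightarrow> j < dim_vec x \<Longrightarrow> K x y $$ (i,j) = y $ i * x $ j"
  "dim_row (K x y) = dim_vec y" "dim_col (K x y) = dim_vec x"
  unfolding K_def by auto

lemma K_left:
  assumes A: "A \<in> carrier_mat n n" and x: "x \<in> carrier_vec n" and y: "y \<in> carrier_vec n"
  shows "A * K x y = K x (A *\<^sub>v y)"
proof (rule eq_matI)
  fix i j assume i: "i < dim_row (K x (A *\<^sub>v y))" and j: "j < dim_col (K x (A *\<^sub>v y))"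
  have "(A * K x y) $$ (i,j) = (\<Sum>k<n. A $$ (i,k) * (y $ k * x $ j))"
    using i j A x y by (simp add: scalar_prod_def lessThan_atLeast0)
  also have "\<dots> = (\<Sum>k<n. A $$ (i,k) * y $ k) * x $ j"
    by (simp add: sum_distrib_right mult.assoc)
  also have "\<dots> = K x (A *\<^sub>v y) $$ (i,j)"
    using i j A x y by (simp add: scalar_prod_def lessThan_atLeast0)
  finally show "(A * K x y) $$ (i,j) = K x (A *\<^sub>v y) $$ (i,j)" .
qed (insert A x y, auto)

lemma K_right:
  assumes A: "A \<in> carrier_mat n n" and x: "x \<in> carrier_vec n" and y: "y \<in> carrier_vec n"
  shows "K x y * A = K (transpose_mat A *\<^sub>v x) y"
proof (rule eq_matI)
  fix i j assume i: "i < dim_row (K (transpose_mat A *\<^sub>v x) y)" and j: "j < dim_col (K (transpose_mat A *\<^sub>v x) y)"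
  have "(K x y * A) $$ (i,j) = (\<Sum>k<n. (y $ i * x $ k) * A $$ (k,j))"
    using i j A x y by (simp add: scalar_prod_def lessThan_atLeast0)
  also have "\<dots> = y $ i * (\<Sum>k<n. A $$ (k,j) * x $ k)"
    by (simp add: sum_distrib_left mult_ac)
  also have "\<dots> = K (transpose_mat A *\<^sub>v x) y $$ (i,j)"
    using i j A x y by (simp add: scalar_prod_def lessThan_atLeast0)
  finally show "(K x y * A) $$ (i,j) = K (transpose_mat A *\<^sub>v x) y $$ (i,j)" .
qed (insert A x y, auto)

lemma K_tr: "transpose_mat (K x y) = K y x"
  by (rule eq_matI) auto

lemma K_vec:
  assumes x: "x \<in> carrier_vec n" and y: "y \<in> carrier_vec n" and u: "u \<in> carrier_vec n"
  shows "K x y *\<^sub>v u = (x \<bullet> u) \<cdot>\<^sub>v y"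
proof (rule eq_vecI)
  fix i assume i: "i < dim_vec ((x \<bullet> u) \<cdot>\<^sub>v y)"
  have "(K x y *\<^sub>v u) $ i = (\<Sum>k<n. (y $ i * x $ k) * u $ k)"
    using i x y u by (simp add: scalar_prod_def lessThan_atLeast0)
  also have "\<dots> = (\<Sum>k<n. x $ k * u $ k) * y $ i"
    unfolding sum_distrib_right by (simp add: mult_ac)
  also have "\<dots> = ((x \<bullet> u) \<cdot>\<^sub>v y) $ i"
    using i x y u by (simp add: scalar_prod_def lessThan_atLeast0)
  finally show "(K x y *\<^sub>v u) $ i = ((x \<bullet> u) \<cdot>\<^sub>v y) $ i" .
qed (insert x y u, auto)

lemma K_add_l: "x \<in> carrier_vec n \<Longrightarrow> x' \<in> carrier_vec n \<Longrightarrow> y \<in> carrier_vec n \<Longrightarrow>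
  K (x + x') y = K x y + K x' y"
  by (rule eq_matI) (auto simp: algebra_simps)
lemma K_add_r: "x \<in> carrier_vec n \<Longrightarrow> y \<in> carrier_vec n \<Longrightarrow> y' \<in> carrier_vec n \<Longrightarrow>
  K x (y + y') = K x y + K x y'"
  by (rule eq_matI) (auto simp: algebra_simps)
lemma K_smult_l: "K (c \<cdot>\<^sub>v x) y = c \<cdot>\<^sub>m K x y"
  by (rule eq_matI) (auto simp: algebra_simps)
lemma K_smult_r: "K x (c \<cdot>\<^sub>v y) = c \<cdot>\<^sub>m K x y"
  by (rule eq_matI) (auto simp: algebra_simps)
lemma K_uminus_l: "K (- x) y = - K x y"
  by (rule eq_matI) (auto simp: algebra_simps)
lemma K_uminus_r: "K x (- y) = - K x y"
  by (rule eq_matI) (auto simp: algebra_simps)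

locale phs =
  fixes n :: nat and G J :: "real mat"
  assumes ph: "pseudo_hermitian n G J"
begin

lemma G[simp]: "G \<in> carrier_mat n n" and J[simp]: "J \<in> carrier_mat n n"
  and Gt: "transpose_mat G = G" and JJ: "J * J = - 1\<^sub>m n"
  and JGJ: "transpose_mat J * G * J = G" and detG: "det G \<noteq> 0"
  using ph unfolding pseudo_hermitian_def by auto

lemma dims[simp]: "dim_row G = n" "dim_col G = n" "dim_row J = n" "dim_col J = n"
  using carrier_matD[OF G] carrier_matD[OF J] by auto

lemmas asv = sq_assoc_vec[of _ n] and asm = sq_assoc[of _ n]

lemma JtG: "transpose_mat J * G = - (G * J)"
proof -
  have c: "transpose_mat J * G \<in> carrier_mat n n" by (simp add: asv)
  have "G * J = (transpose_mat J * G * J) * J" using JGJ by (simp add: asv)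
  also have "\<dots> = (transpose_mat J * G) * (J * J)" using c by (simp add: asm)
  also have "\<dots> = - (transpose_mat J * G)" unfolding JJ using c by (simp add: carrier_matD)
  finally show ?thesis by (simp add: asv)
qed

lemma JJv: "v \<in> carrier_vec n \<Longrightarrow> J *\<^sub>v (J *\<^sub>v v) = - v"
proof -
  assume v: "v \<in> carrier_vec n"
  have "J *\<^sub>v (J *\<^sub>v v) = (J * J) *\<^sub>v v" using v by (simp add: asv)
  also have "\<dots> = - v" unfolding JJ using v by (simp add: asv)
  finally show ?thesis .
qed

definition M :: "real vec \<Rightarrow> real vec \<Rightarrow> real mat" where
  "M a b = K (G *\<^sub>v a) b + K (G *\<^sub>v (J *\<^sub>v a)) (J *\<^sub>v b)"

lemma M_carrier[simp]: "a \<in> carrier_vec n \<Longrightarrow> b \<in> carrier_vec n \<Longrightarrow> M a b \<in> carrier_mat n n"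
  unfolding M_def by (simp add: asv)

lemma M_left:
  assumes P: "P \<in> carrier_mat n n" "P * J = J * P" and a: "a \<in> carrier_vec n" and b: "b \<in> carrier_vec n"
  shows "P * M a b = M a (P *\<^sub>v b)"
proof -
  have "P * M a b = P * K (G *\<^sub>v a) b + P * K (G *\<^sub>v (J *\<^sub>v a)) (J *\<^sub>v b)"
    unfolding M_def using P a b by (simp add: sq_mult_add[of P n])
  also have "\<dots> = K (G *\<^sub>v a) (P *\<^sub>v b) + K (G *\<^sub>v (J *\<^sub>v a)) (P *\<^sub>v (J *\<^sub>v b))"
    using P a b by (simp add: K_left[of P n])
  also have "P *\<^sub>v (J *\<^sub>v b) = J *\<^sub>v (P *\<^sub>v b)"
  proof -
    have "P *\<^sub>v (J *\<^sub>v b) = (P * J) *\<^sub>v b" using P(1) b by (simp add: asv)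
    also have "\<dots> = (J * P) *\<^sub>v b" by (simp only: P(2))
    also have "\<dots> = J *\<^sub>v (P *\<^sub>v b)" using P(1) b by (simp add: asv)
    finally show ?thesis .
  qed
  finally show ?thesis unfolding M_def .
qed

lemma M_right:
  assumes P: "P \<in> carrier_mat n n" "P * J = J * P" "transpose_mat P * G = G * P"
    and a: "a \<in> carrier_vec n" and b: "b \<in> carrier_vec n"
  shows "M a b * P = M (P *\<^sub>v a) b"
proof -
  have tr: "transpose_mat P *\<^sub>v (G *\<^sub>v v) = G *\<^sub>v (P *\<^sub>v v)" if v: "v \<in> carrier_vec n" for v
  proof -
    have "transpose_mat P *\<^sub>v (G *\<^sub>v v) = (transpose_mat P * G) *\<^sub>v v" using P(1) v by (simp add: asv)
    also have "\<dots> = (G * P) *\<^sub>v v" by (simp only: P(3))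
    also have "\<dots> = G *\<^sub>v (P *\<^sub>v v)" using P(1) v by (simp add: asv)
    finally show ?thesis .
  qed
  have PJ: "P *\<^sub>v (J *\<^sub>v a) = J *\<^sub>v (P *\<^sub>v a)"
  proof -
    have "P *\<^sub>v (J *\<^sub>v a) = (P * J) *\<^sub>v a" using P(1) a by (simp add: asv)
    also have "\<dots> = (J * P) *\<^sub>v a" by (simp only: P(2))
    also have "\<dots> = J *\<^sub>v (P *\<^sub>v a)" using P(1) a by (simp add: asv)
    finally show ?thesis .
  qed
  have "M a b * P = K (G *\<^sub>v a) b * P + K (G *\<^sub>v (J *\<^sub>v a)) (J *\<^sub>v b) * P"
    unfolding M_def using P a b by (simp add: sq_add_mult[of _ n])
  also have "\<dots> = K (transpose_mat P *\<^sub>v (G *\<^sub>v a)) b + K (transpose_mat P *\<^sub>v (G *\<^sub>v (J *\<^sub>v a))) (J *\<^sub>v b)"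
    using P a b by (simp add: K_right[of P n])
  also have "\<dots> = M (P *\<^sub>v a) b" unfolding M_def tr[OF a] tr[OF sq_mult_vec[OF J a]] PJ using a by (simp add: asv)
  finally show ?thesis .
qed

lemma M_J: assumes a: "a \<in> carrier_vec n" and b: "b \<in> carrier_vec n"
  shows "M a b * J = J * M a b"
proof -
  have "J * M a b = M a (J *\<^sub>v b)" using M_left[of J a b] a b by (simp add: asv)
  also have "\<dots> = K (G *\<^sub>v a) (J *\<^sub>v b) + K (G *\<^sub>v (J *\<^sub>v a)) (- b)"
    unfolding M_def JJv[OF b] ..
  finally have 1: "J * M a b = K (G *\<^sub>v a) (J *\<^sub>v b) + - K (G *\<^sub>v (J *\<^sub>v a)) b"
    by (simp add: K_uminus_r)
  have t1: "transpose_mat J *\<^sub>v (G *\<^sub>v a) = - (G *\<^sub>v (J *\<^sub>v a))"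
  proof -
    have "transpose_mat J *\<^sub>v (G *\<^sub>v a) = (transpose_mat J * G) *\<^sub>v a" using a by (simp add: asv)
    also have "\<dots> = - (G * J) *\<^sub>v a" unfolding JtG ..
    also have "\<dots> = - (G *\<^sub>v (J *\<^sub>v a))" using a by (simp add: asv carrier_vecD carrier_matD)
    finally show ?thesis .
  qed
  have t2: "transpose_mat J *\<^sub>v (G *\<^sub>v (J *\<^sub>v a)) = G *\<^sub>v a"
  proof -
    have "transpose_mat J *\<^sub>v (G *\<^sub>v (J *\<^sub>v a)) = (transpose_mat J * G * J) *\<^sub>v a" using a by (simp add: asv)
    also have "\<dots> = G *\<^sub>v a" unfolding JGJ ..
    finally show ?thesis .
  qed
  have "M a b * J = K (G *\<^sub>v a) b * J + K (G *\<^sub>v (J *\<^sub>v a)) (J *\<^sub>v b) * J"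
    unfolding M_def using a b by (simp add: sq_add_mult[of _ n])
  also have "\<dots> = K (- (G *\<^sub>v (J *\<^sub>v a))) b + K (G *\<^sub>v a) (J *\<^sub>v b)"
    using a b by (simp add: K_right[of J n] t1 t2)
  also have "\<dots> = - K (G *\<^sub>v (J *\<^sub>v a)) b + K (G *\<^sub>v a) (J *\<^sub>v b)"
    by (simp add: K_uminus_l)
  also have "\<dots> = K (G *\<^sub>v a) (J *\<^sub>v b) + - K (G *\<^sub>v (J *\<^sub>v a)) b"
    using a b by (intro comm_add_mat[of _ n n]) auto
  finally show ?thesis using 1 by (simp add: asv)
qed

lemma M_tr: assumes a: "a \<in> carrier_vec n" and b: "b \<in> carrier_vec n"
  shows "transpose_mat (M a b) * G = G * M b a"
proof -
  have "transpose_mat (M a b) = K b (G *\<^sub>v a) + K (J *\<^sub>v b) (G *\<^sub>v (J *\<^sub>v a))"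
    unfolding M_def using a b by (simp add: transpose_add[of _ n n] K_tr)
  then have "transpose_mat (M a b) * G = K b (G *\<^sub>v a) * G + K (J *\<^sub>v b) (G *\<^sub>v (J *\<^sub>v a)) * G"
    using a b by (simp add: sq_add_mult[of _ n])
  also have "\<dots> = K (G *\<^sub>v b) (G *\<^sub>v a) + K (G *\<^sub>v (J *\<^sub>v b)) (G *\<^sub>v (J *\<^sub>v a))"
    using a b by (simp add: K_right[of G n] Gt)
  also have "\<dots> = G * M b a"
    unfolding M_def using a b by (simp add: sq_mult_add[of G n] K_left[of G n])
  finally show ?thesis .
qed

lemma X_u: assumes a: "a \<in> carrier_vec n" and b: "b \<in> carrier_vec n"
  shows "M a b - M b a \<in> u_alg n G J"
proof -
  have c: "M a b \<in> carrier_mat n n" "M b a \<in> carrier_mat n n" using a b by auto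
  have 1: "(M a b - M b a) * J = J * (M a b - M b a)"
    using c M_J[OF a b] M_J[OF b a]
    by (simp add: sq_minus_mult[of _ n] sq_mult_minus[of _ n])
  have "transpose_mat (M a b - M b a) * G = transpose_mat (M a b) * G - transpose_mat (M b a) * G"
    using c by (simp add: transpose_minus[of _ n n] sq_minus_mult[of _ n])
  also have "\<dots> = G * M b a - G * M a b" using M_tr[OF a b] M_tr[OF b a] by (simp add: asv)
  also have "\<dots> = - (G * (M a b - M b a))"
    using c by (simp add: sq_mult_minus[of _ n]) (rule eq_matI, auto)
  finally show ?thesis using c 1 unfolding u_alg_def by auto
qed

end

lemma pm_zero: "poly_mat n 0 A = 0\<^sub>m n n"
  unfolding poly_mat_def by simp

lemma pm_pCons: assumes A: "A \<in> carrier_mat n n"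
  shows "poly_mat n (pCons a q) A = a \<cdot>\<^sub>m 1\<^sub>m n + A * poly_mat n q A"
proof (cases "coeffs q = [] \<and> a = 0")
  case True
  then have q: "q = 0" and a: "a = 0" by auto
  have "poly_mat n (pCons a q) A = 0\<^sub>m n n" using q a by (simp add: pm_zero)
  also have "\<dots> = a \<cdot>\<^sub>m 1\<^sub>m n + A * poly_mat n q A"
    using q a A by (simp add: pm_zero) (rule eq_matI, auto)
  finally show ?thesis .
next
  case False
  then have "coeffs (pCons a q) = a # coeffs q" by (auto simp: cCons_def)
  then show ?thesis unfolding poly_mat_def by simp
qed

lemma pm_carrier: assumes A: "A \<in> carrier_mat n n"
  shows "poly_mat n p A \<in> carrier_mat n n"
proof (induction p rule: pCons_induct)
  case 0 then show ?case by (simp add: pm_zero)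
next
  case (pCons a p) then show ?case using A by (simp add: pm_pCons)
qed

lemma sm_one_l: "B \<in> carrier_mat n n \<Longrightarrow> (a \<cdot>\<^sub>m 1\<^sub>m n) * B = a \<cdot>\<^sub>m (B :: real mat)"
  using mult_smult_assoc_mat[of "1\<^sub>m n" n n B n a] by simp
lemma sm_one_r: "B \<in> carrier_mat n n \<Longrightarrow> B * (a \<cdot>\<^sub>m 1\<^sub>m n) = a \<cdot>\<^sub>m (B :: real mat)"
  using mult_smult_distrib[of B n n "1\<^sub>m n" n a] by simp
lemma sm_mat_vec: "A \<in> carrier_mat n n \<Longrightarrow> v \<in> carrier_vec n \<Longrightarrow> (a \<cdot>\<^sub>m A) *\<^sub>v v = a \<cdot>\<^sub>v (A *\<^sub>v (v :: real vec))"
  by (rule eq_vecI) (auto simp: scalar_prod_def sum_distrib_left mult.assoc)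
lemma sm_one_vec: "v \<in> carrier_vec n \<Longrightarrow> (a \<cdot>\<^sub>m 1\<^sub>m n) *\<^sub>v v = a \<cdot>\<^sub>v (v :: real vec)"
  using sm_mat_vec[of "1\<^sub>m n" n v a] by simp
lemma sm_vec: "A \<in> carrier_mat n n \<Longrightarrow> v \<in> carrier_vec n \<Longrightarrow> A *\<^sub>v (c \<cdot>\<^sub>v v) = c \<cdot>\<^sub>v (A *\<^sub>v (v :: real vec))"
  by (rule mult_mat_vec)
lemma add_vec_d: "A \<in> carrier_mat n n \<Longrightarrow> v \<in> carrier_vec n \<Longrightarrow> w \<in> carrier_vec n \<Longrightarrow>
   A *\<^sub>v (v + w) = A *\<^sub>v v + A *\<^sub>v (w :: real vec)"
  by (rule mult_add_distrib_mat_vec)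
lemma add_d_vec: "A \<in> carrier_mat n n \<Longrightarrow> B \<in> carrier_mat n n \<Longrightarrow> v \<in> carrier_vec n \<Longrightarrow>
   (A + B) *\<^sub>v v = A *\<^sub>v v + B *\<^sub>v (v :: real vec)"
  by (rule add_mult_distrib_mat_vec)

lemma pm_comm: fixes A :: "real mat" assumes A: "A \<in> carrier_mat n n" and Y: "Y \<in> carrier_mat n n" and YA: "Y * A = A * Y"
  shows "Y * poly_mat n p A = poly_mat n p A * Y"
proof (induction p rule: pCons_induct)
  case 0 then show ?case using Y by (simp add: pm_zero)
next
  case (pCons a p)
  define Q where "Q = poly_mat n p A"
  have Q: "Q \<in> carrier_mat n n" unfolding Q_def using A by (rule pm_carrier)
  have IH: "Y * Q = Q * Y" using pCons unfolding Q_def by simp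
  have f1: "Y * (a \<cdot>\<^sub>m 1\<^sub>m n + A * Q) = Y * (a \<cdot>\<^sub>m 1\<^sub>m n) + Y * (A * Q)"
    by (rule sq_mult_add) (use A Y Q in auto)
  have f2: "Y * (a \<cdot>\<^sub>m 1\<^sub>m n) = a \<cdot>\<^sub>m Y" using Y by (rule sm_one_r)
  have f3: "Y * (A * Q) = A * (Q * Y)"
  proof -
    have "Y * (A * Q) = (Y * A) * Q" using Y A Q by (rule sq_assoc[symmetric])
    also have "\<dots> = (A * Y) * Q" unfolding YA ..
    also have "\<dots> = A * (Y * Q)" using A Y Q by (rule sq_assoc)
    finally show ?thesis unfolding IH .
  qed
  have f4: "(a \<cdot>\<^sub>m 1\<^sub>m n + A * Q) * Y = (a \<cdot>\<^sub>m 1\<^sub>m n) * Y + (A * Q) * Y"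
    by (rule sq_add_mult) (use A Y Q in auto)
  have f5: "(a \<cdot>\<^sub>m 1\<^sub>m n) * Y = a \<cdot>\<^sub>m Y" using Y by (rule sm_one_l)
  have f6: "(A * Q) * Y = A * (Q * Y)" using A Q Y by (rule sq_assoc)
  show ?case unfolding pm_pCons[OF A] Q_def[symmetric] f1 f2 f3 f4 f5 f6 ..
qed

lemma pm_eig: fixes A :: "real mat" assumes A: "A \<in> carrier_mat n n" and v: "v \<in> carrier_vec n" and Av: "A *\<^sub>v v = l \<cdot>\<^sub>v v"
  shows "poly_mat n p A *\<^sub>v v = poly p l \<cdot>\<^sub>v v"
proof (induction p rule: pCons_induct)
  case 0 then show ?case using v by (simp add: pm_zero) (rule eq_vecI, auto)
next
  case (pCons a p)
  define Q where "Q = poly_mat n p A"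
  have Q: "Q \<in> carrier_mat n n" unfolding Q_def using A by (rule pm_carrier)
  have IH: "Q *\<^sub>v v = poly p l \<cdot>\<^sub>v v" using pCons unfolding Q_def by simp
  have "(a \<cdot>\<^sub>m 1\<^sub>m n + A * Q) *\<^sub>v v = (a \<cdot>\<^sub>m 1\<^sub>m n) *\<^sub>v v + (A * Q) *\<^sub>v v"
    by (rule add_d_vec) (use A Q v in auto)
  also have "\<dots> = a \<cdot>\<^sub>v v + A *\<^sub>v (Q *\<^sub>v v)"
    using A Q v by (simp add: sm_one_vec sq_assoc_vec[of _ n])
  also have "\<dots> = a \<cdot>\<^sub>v v + poly p l \<cdot>\<^sub>v (l \<cdot>\<^sub>v v)" unfolding IH using A v by (simp add: sm_vec Av)
  also have "\<dots> = poly (pCons a p) l \<cdot>\<^sub>v v" using v by (intro eq_vecI) (auto simp: algebra_simps)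
  finally show ?case unfolding pm_pCons[OF A] Q_def .
qed

lemma pm_jor: fixes A :: "real mat" assumes A: "A \<in> carrier_mat n n" and v: "v \<in> carrier_vec n" and w: "w \<in> carrier_vec n"
  and Av: "A *\<^sub>v v = l \<cdot>\<^sub>v v + w" and Aw: "A *\<^sub>v w = l \<cdot>\<^sub>v w"
  shows "poly_mat n p A *\<^sub>v v = poly p l \<cdot>\<^sub>v v + poly (pderiv p) l \<cdot>\<^sub>v w"
proof (induction p rule: pCons_induct)
  case 0 then show ?case using v w by (simp add: pm_zero) (rule eq_vecI, auto)
next
  case (pCons a p)
  define Q where "Q = poly_mat n p A"
  have Q: "Q \<in> carrier_mat n n" unfolding Q_def using A by (rule pm_carrier)
  have IH: "Q *\<^sub>v v = poly p l \<cdot>\<^sub>v v + poly (pderiv p) l \<cdot>\<^sub>v w" using pCons unfolding Q_def by simp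
  have e1: "(a \<cdot>\<^sub>m 1\<^sub>m n + A * Q) *\<^sub>v v = (a \<cdot>\<^sub>m 1\<^sub>m n) *\<^sub>v v + (A * Q) *\<^sub>v v"
    by (rule add_d_vec) (use A Q v in auto)
  have e2: "(a \<cdot>\<^sub>m 1\<^sub>m n) *\<^sub>v v = a \<cdot>\<^sub>v v" using v by (rule sm_one_vec)
  have e3: "(A * Q) *\<^sub>v v = A *\<^sub>v (Q *\<^sub>v v)" using A Q v by (rule sq_assoc_vec)
  have e4: "A *\<^sub>v (Q *\<^sub>v v) = A *\<^sub>v (poly p l \<cdot>\<^sub>v v) + A *\<^sub>v (poly (pderiv p) l \<cdot>\<^sub>v w)"
    unfolding IH by (rule add_vec_d) (use A v w in auto)
  have e5: "A *\<^sub>v (poly p l \<cdot>\<^sub>v v) + A *\<^sub>v (poly (pderiv p) l \<cdot>\<^sub>v w)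
      = poly p l \<cdot>\<^sub>v (l \<cdot>\<^sub>v v + w) + poly (pderiv p) l \<cdot>\<^sub>v (l \<cdot>\<^sub>v w)"
    unfolding sm_vec[OF A v] sm_vec[OF A w] Av Aw ..
  have e6: "a \<cdot>\<^sub>v v + (poly p l \<cdot>\<^sub>v (l \<cdot>\<^sub>v v + w) + poly (pderiv p) l \<cdot>\<^sub>v (l \<cdot>\<^sub>v w))
       = (a + l * poly p l) \<cdot>\<^sub>v v + (poly p l + l * poly (pderiv p) l) \<cdot>\<^sub>v w"
    using v w by (intro eq_vecI) (auto simp: algebra_simps)
  have e7: "(a + l * poly p l) = poly (pCons a p) l" by simp
  have e8: "(poly p l + l * poly (pderiv p) l) = poly (pderiv (pCons a p)) l"
    by (simp add: pderiv_pCons)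
  have "poly_mat n (pCons a p) A *\<^sub>v v = poly (pCons a p) l \<cdot>\<^sub>v v + poly (pderiv (pCons a p)) l \<cdot>\<^sub>v w"
    unfolding pm_pCons[OF A] Q_def[symmetric] e1 e2 e3 e4 e5 e6 e7 e8 ..
  then show ?case .
qed

lemma pm_herm: fixes A :: "real mat" assumes A: "A \<in> carrier_mat n n" and G: "G \<in> carrier_mat n n"
  and AG: "transpose_mat A * G = G * A"
  shows "transpose_mat (poly_mat n p A) * G = G * poly_mat n p A"
proof (induction p rule: pCons_induct)
  case 0 then show ?case using G by (simp add: pm_zero)
next
  case (pCons a p)
  define Q where "Q = poly_mat n p A"
  have Q: "Q \<in> carrier_mat n n" unfolding Q_def using A by (rule pm_carrier)
  have IH: "transpose_mat Q * G = G * Q" using pCons unfolding Q_def by simp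
  have AQ: "A * Q = Q * A" unfolding Q_def using pm_comm[OF A A refl] by simp
  have t1: "transpose_mat (a \<cdot>\<^sub>m 1\<^sub>m n :: real mat) = a \<cdot>\<^sub>m 1\<^sub>m n" by (rule eq_matI) auto
  have h1: "transpose_mat (a \<cdot>\<^sub>m 1\<^sub>m n + A * Q) = a \<cdot>\<^sub>m 1\<^sub>m n + transpose_mat Q * transpose_mat A"
    using transpose_add[of "a \<cdot>\<^sub>m 1\<^sub>m n" n n "A * Q"] transpose_mult[OF A Q] t1 A Q by simp
  have h2: "(a \<cdot>\<^sub>m 1\<^sub>m n + transpose_mat Q * transpose_mat A) * G
      = (a \<cdot>\<^sub>m 1\<^sub>m n) * G + (transpose_mat Q * transpose_mat A) * G"
    by (rule sq_add_mult) (use A Q G in auto)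
  have h3: "(a \<cdot>\<^sub>m 1\<^sub>m n) * G = a \<cdot>\<^sub>m G" using G by (rule sm_one_l)
  have h4: "(transpose_mat Q * transpose_mat A) * G = G * (A * Q)"
  proof -
    have QT: "transpose_mat Q \<in> carrier_mat n n" "transpose_mat A \<in> carrier_mat n n" using Q A by auto
    have "(transpose_mat Q * transpose_mat A) * G = transpose_mat Q * (transpose_mat A * G)"
      using QT G by (rule sq_assoc)
    also have "\<dots> = transpose_mat Q * (G * A)" unfolding AG ..
    also have "\<dots> = (transpose_mat Q * G) * A" using QT(1) G A by (rule sq_assoc[symmetric])
    also have "\<dots> = (G * Q) * A" unfolding IH ..
    also have "\<dots> = G * (Q * A)" using G Q A by (rule sq_assoc)
    finally show ?thesis unfolding AQ .
  qed
  have h5: "G * (a \<cdot>\<^sub>m 1\<^sub>m n + A * Q) = G * (a \<cdot>\<^sub>m 1\<^sub>m n) + G * (A * Q)"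
    by (rule sq_mult_add) (use A Q G in auto)
  have h6: "G * (a \<cdot>\<^sub>m 1\<^sub>m n) = a \<cdot>\<^sub>m G" using G by (rule sm_one_r)
  show ?case unfolding pm_pCons[OF A] Q_def[symmetric] h1 h2 h3 h4 h5 h6 ..
qed

context phs begin

lemma Gv[simp]: "a \<in> carrier_vec n \<Longrightarrow> G *\<^sub>v a \<in> carrier_vec n" by simp
lemma Jv[simp]: "a \<in> carrier_vec n \<Longrightarrow> J *\<^sub>v a \<in> carrier_vec n" by simp

lemma M_sm_l: assumes a: "a \<in> carrier_vec n" and b: "b \<in> carrier_vec n"
  shows "M (c \<cdot>\<^sub>v a) b = c \<cdot>\<^sub>m M a b"
proof -
  have "M (c \<cdot>\<^sub>v a) b = c \<cdot>\<^sub>m K (G *\<^sub>v a) b + c \<cdot>\<^sub>m K (G *\<^sub>v (J *\<^sub>v a)) (J *\<^sub>v b)"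
    unfolding M_def sm_vec[OF J a] sm_vec[OF G a] sm_vec[OF G Jv[OF a]] K_smult_l ..
  also have "\<dots> = c \<cdot>\<^sub>m M a b" unfolding M_def using a b by (intro eq_matI) (auto simp: algebra_simps)
  finally show ?thesis .
qed

lemma M_sm_r: assumes a: "a \<in> carrier_vec n" and b: "b \<in> carrier_vec n"
  shows "M a (c \<cdot>\<^sub>v b) = c \<cdot>\<^sub>m M a b"
proof -
  have "M a (c \<cdot>\<^sub>v b) = c \<cdot>\<^sub>m K (G *\<^sub>v a) b + c \<cdot>\<^sub>m K (G *\<^sub>v (J *\<^sub>v a)) (J *\<^sub>v b)"
    unfolding M_def sm_vec[OF J b] K_smult_r ..
  also have "\<dots> = c \<cdot>\<^sub>m M a b" unfolding M_def using a b by (intro eq_matI) (auto simp: algebra_simps)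
  finally show ?thesis .
qed

lemma M_add_l: assumes a: "a \<in> carrier_vec n" and a': "a' \<in> carrier_vec n" and b: "b \<in> carrier_vec n"
  shows "M (a + a') b = M a b + M a' b"
proof -
  have "M (a + a') b = (K (G *\<^sub>v a) b + K (G *\<^sub>v a') b)
     + (K (G *\<^sub>v (J *\<^sub>v a)) (J *\<^sub>v b) + K (G *\<^sub>v (J *\<^sub>v a')) (J *\<^sub>v b))"
    unfolding M_def add_vec_d[OF J a a'] add_vec_d[OF G a a'] add_vec_d[OF G Jv[OF a] Jv[OF a']]
    K_add_l[OF Gv[OF a] Gv[OF a'] b] K_add_l[OF Gv[OF Jv[OF a]] Gv[OF Jv[OF a']] Jv[OF b]] ..
  also have "\<dots> = M a b + M a' b" unfolding M_def using a a' b by (intro eq_matI) (auto simp: algebra_simps)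
  finally show ?thesis .
qed

lemma M_add_r: assumes a: "a \<in> carrier_vec n" and b: "b \<in> carrier_vec n" and b': "b' \<in> carrier_vec n"
  shows "M a (b + b') = M a b + M a b'"
proof -
  have "M a (b + b') = (K (G *\<^sub>v a) b + K (G *\<^sub>v a) b')
     + (K (G *\<^sub>v (J *\<^sub>v a)) (J *\<^sub>v b) + K (G *\<^sub>v (J *\<^sub>v a)) (J *\<^sub>v b'))"
    unfolding M_def add_vec_d[OF J b b']
    K_add_r[OF Gv[OF a] b b'] K_add_r[OF Gv[OF Jv[OF a]] Jv[OF b] Jv[OF b']] ..
  also have "\<dots> = M a b + M a b'" unfolding M_def using a b b' by (intro eq_matI) (auto simp: algebra_simps)
  finally show ?thesis .
qed

definition herm :: "real mat \<Rightarrow> bool" where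
  "herm H \<longleftrightarrow> H \<in> carrier_mat n n \<and> H * J = J * H \<and> transpose_mat H * G = G * H"

lemma comm1: assumes H: "herm H" and a: "a \<in> carrier_vec n" and b: "b \<in> carrier_vec n"
  and Ha: "H *\<^sub>v a = ha \<cdot>\<^sub>v a" and Hb: "H *\<^sub>v b = hb \<cdot>\<^sub>v b"
  shows "commutator (M a b - M b a) H = (ha - hb) \<cdot>\<^sub>m (M a b + M b a)"
proof -
  have H': "H \<in> carrier_mat n n" "H * J = J * H" "transpose_mat H * G = G * H" using H unfolding herm_def by auto
  have c: "M a b \<in> carrier_mat n n" "M b a \<in> carrier_mat n n" using a b by auto
  have 1: "(M a b - M b a) * H = ha \<cdot>\<^sub>m M a b - hb \<cdot>\<^sub>m M b a"
    using c H' unfolding sq_minus_mult[OF c H'(1)] M_right[OF H' a b] M_right[OF H' b a] Ha Hb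
      M_sm_l[OF a b] M_sm_l[OF b a] by simp
  have 2: "H * (M a b - M b a) = hb \<cdot>\<^sub>m M a b - ha \<cdot>\<^sub>m M b a"
    using c H' unfolding sq_mult_minus[OF H'(1) c] M_left[OF H'(1,2) a b] M_left[OF H'(1,2) b a] Ha Hb
      M_sm_r[OF a b] M_sm_r[OF b a] by simp
  show ?thesis unfolding commutator_def 1 2 using c by (intro eq_matI) (auto simp: algebra_simps)
qed

lemma comm2: assumes H: "herm H" and w: "w \<in> carrier_vec n" and v: "v \<in> carrier_vec n"
  and Hw: "H *\<^sub>v w = mu \<cdot>\<^sub>v w" and Hv: "H *\<^sub>v v = mu \<cdot>\<^sub>v v + nu \<cdot>\<^sub>v w"
  shows "commutator (M w v - M v w) H = (- 2 * nu) \<cdot>\<^sub>m M w w"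
proof -
  have H': "H \<in> carrier_mat n n" "H * J = J * H" "transpose_mat H * G = G * H" using H unfolding herm_def by auto
  have c: "M w v \<in> carrier_mat n n" "M v w \<in> carrier_mat n n" "M w w \<in> carrier_mat n n" using w v by auto
  have 1: "(M w v - M v w) * H = mu \<cdot>\<^sub>m M w v - (mu \<cdot>\<^sub>m M v w + nu \<cdot>\<^sub>m M w w)"
    unfolding sq_minus_mult[OF c(1,2) H'(1)] M_right[OF H' w v] M_right[OF H' v w] Hw Hv
      M_sm_l[OF w v] M_add_l[OF smult_carrier_vec[THEN iffD2, OF v] smult_carrier_vec[THEN iffD2, OF w] w]
      M_sm_l[OF v w] M_sm_l[OF w w] ..
  have 2: "H * (M w v - M v w) = (mu \<cdot>\<^sub>m M w v + nu \<cdot>\<^sub>m M w w) - mu \<cdot>\<^sub>m M v w"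
    unfolding sq_mult_minus[OF H'(1) c(1,2)] M_left[OF H'(1,2) w v] M_left[OF H'(1,2) v w] Hw Hv
      M_add_r[OF w smult_carrier_vec[THEN iffD2, OF v] smult_carrier_vec[THEN iffD2, OF w]]
      M_sm_r[OF w v] M_sm_r[OF w w] M_sm_r[OF v w] ..
  show ?thesis unfolding commutator_def 1 2 using c by (intro eq_matI) (auto simp: algebra_simps)
qed

lemma M_vec: assumes a: "a \<in> carrier_vec n" and b: "b \<in> carrier_vec n" and u: "u \<in> carrier_vec n"
  shows "M a b *\<^sub>v u = ((G *\<^sub>v a) \<bullet> u) \<cdot>\<^sub>v b + ((G *\<^sub>v (J *\<^sub>v a)) \<bullet> u) \<cdot>\<^sub>v (J *\<^sub>v b)"
  unfolding M_def add_d_vec[OF K_carrier[OF Gv[OF a] b] K_carrier[OF Gv[OF Jv[OF a]] Jv[OF b]] u]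
    K_vec[OF Gv[OF a] b u] K_vec[OF Gv[OF Jv[OF a]] Jv[OF b] u] ..

lemma Gnz: assumes a: "a \<in> carrier_vec n" "a \<noteq> 0\<^sub>v n" shows "G *\<^sub>v a \<noteq> 0\<^sub>v n"
  using det_0_iff_vec_prod_zero[OF G] detG a by auto

lemma sq_pos: assumes x: "x \<in> carrier_vec n" "x \<noteq> 0\<^sub>v n" shows "x \<bullet> x > (0::real)"
proof -
  obtain i where i: "i < n" "x $ i \<noteq> 0"
  proof (rule ccontr)
    assume "\<not> thesis"
    then have "\<forall>i<n. x $ i = 0" using that by blast
    then have "x = 0\<^sub>v n" using x(1) by (intro eq_vecI) auto
    then show False using x(2) by simp
  qed
  have eq: "x \<bullet> x = (\<Sum>k\<in>{0..<n}. x $ k * x $ k)" using x(1) unfolding scalar_prod_def by simp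
  have pi: "0 < x $ i * x $ i" using i(2) by (cases "x $ i > 0") (auto simp: zero_less_mult_iff)
  have "(\<Sum>k\<in>{0..<n}. x $ k * x $ k) > 0" using i pi by (intro sum_pos2[of _ i]) auto
  then show ?thesis unfolding eq .
qed

lemma M_nz: assumes a: "a \<in> carrier_vec n" "a \<noteq> 0\<^sub>v n" and b: "b \<in> carrier_vec n" "b \<noteq> 0\<^sub>v n"
  shows "M a b \<noteq> 0\<^sub>m n n"
proof
  assume M0: "M a b = 0\<^sub>m n n"
  define u where "u = G *\<^sub>v a"
  have u: "u \<in> carrier_vec n" unfolding u_def using a by simp
  define c where "c = (G *\<^sub>v a) \<bullet> u"
  define d where "d = (G *\<^sub>v (J *\<^sub>v a)) \<bullet> u"
  have cpos: "c > 0" unfolding c_def u_def using sq_pos[OF Gv[OF a(1)] Gnz[OF a]] .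
  have e1: "c \<cdot>\<^sub>v b + d \<cdot>\<^sub>v (J *\<^sub>v b) = 0\<^sub>v n"
  proof -
    have z: "0\<^sub>m n n *\<^sub>v u = (0\<^sub>v n :: real vec)" using u by (intro eq_vecI) (auto simp: scalar_prod_def)
    show ?thesis using M_vec[OF a(1) b(1) u] M0 z unfolding c_def d_def by simp
  qed
  have "J *\<^sub>v (c \<cdot>\<^sub>v b + d \<cdot>\<^sub>v (J *\<^sub>v b)) = c \<cdot>\<^sub>v (J *\<^sub>v b) + d \<cdot>\<^sub>v (- b)"
    unfolding add_vec_d[OF J smult_carrier_vec[THEN iffD2, OF b(1)] smult_carrier_vec[THEN iffD2, OF Jv[OF b(1)]]]
      sm_vec[OF J b(1)] sm_vec[OF J Jv[OF b(1)]] JJv[OF b(1)] ..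
  moreover have "J *\<^sub>v (0\<^sub>v n) = (0\<^sub>v n :: real vec)" by (intro eq_vecI) (auto simp: scalar_prod_def)
  ultimately have e2: "c \<cdot>\<^sub>v (J *\<^sub>v b) + d \<cdot>\<^sub>v (- b) = 0\<^sub>v n" unfolding e1 by simp
  have "b = 0\<^sub>v n"
  proof (rule eq_vecI)
    fix i assume "i < dim_vec (0\<^sub>v n :: real vec)"
    then have i: "i < n" by simp
    have q1: "c * b $ i + d * (J *\<^sub>v b) $ i = 0"
      using arg_cong[OF e1, of "\<lambda>x. x $ i"] i b(1) by simp
    have q2: "c * (J *\<^sub>v b) $ i - d * b $ i = 0"
      using arg_cong[OF e2, of "\<lambda>x. x $ i"] i b(1) by simp
    have "(c * c + d * d) * b $ i = c * (c * b $ i + d * (J *\<^sub>v b) $ i) - d * (c * (J *\<^sub>v b) $ i - d * b $ i)"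
      by (simp add: algebra_simps)
    also have "\<dots> = 0" using q1 q2 by simp
    finally have "(c * c + d * d) * b $ i = 0" .
    moreover have "c * c + d * d > 0" using cpos by (simp add: add_pos_nonneg)
    ultimately have "b $ i = 0" using cpos by auto
    then show "b $ i = 0\<^sub>v n $ i" using i by simp
  qed (use b in simp)
  then show False using b(2) by simp
qed

end

lemma smm_l: "X \<in> carrier_mat n n \<Longrightarrow> B \<in> carrier_mat n n \<Longrightarrow> (a \<cdot>\<^sub>m X) * B = a \<cdot>\<^sub>m (X * B :: real mat)"
  by (rule mult_smult_assoc_mat)
lemma smm_r: "X \<in> carrier_mat n n \<Longrightarrow> B \<in> carrier_mat n n \<Longrightarrow> B * (a \<cdot>\<^sub>m X) = a \<cdot>\<^sub>m (B * X :: real mat)"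
  by (rule mult_smult_distrib)
lemma tr_sm: "transpose_mat (a \<cdot>\<^sub>m X) = a \<cdot>\<^sub>m transpose_mat (X :: real mat)"
  by (rule eq_matI) auto

lemma sum_zero_eq: assumes X: "X \<in> carrier_mat n n" and Y: "Y \<in> carrier_mat n n"
  and e: "X + Y = 0\<^sub>m n n" shows "X = - (Y :: real mat)"
proof (rule eq_matI)
  fix i j assume "i < dim_row (- Y)" "j < dim_col (- Y)"
  then have ij: "i < n" "j < n" using Y by auto
  have "(X + Y) $$ (i,j) = 0\<^sub>m n n $$ (i,j)" using e by simp
  then show "X $$ (i,j) = (- Y) $$ (i,j)" using ij X Y by simp
qed (use X Y in auto)

lemma diff_zero_eq: assumes X: "X \<in> carrier_mat n n" and Y: "Y \<in> carrier_mat n n"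
  and e: "X - Y = 0\<^sub>m n n" shows "X = (Y :: real mat)"
proof (rule eq_matI)
  fix i j assume "i < dim_row Y" "j < dim_col Y"
  then have ij: "i < n" "j < n" using Y by auto
  have "(X - Y) $$ (i,j) = 0\<^sub>m n n $$ (i,j)" using e by simp
  then show "X $$ (i,j) = Y $$ (i,j)" using ij X Y by simp
qed (use X Y in auto)

context phs begin

lemma u_carrier: "X \<in> u_alg n G J \<Longrightarrow> X \<in> carrier_mat n n" unfolding u_alg_def by auto

lemma u_lc: assumes X: "X \<in> u_alg n G J" and Y: "Y \<in> u_alg n G J"
  shows "a \<cdot>\<^sub>m X + b \<cdot>\<^sub>m Y \<in> u_alg n G J"
proof -
  have c: "X \<in> carrier_mat n n" "Y \<in> carrier_mat n n" using X Y u_carrier by auto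
  have XJ: "X * J = J * X" "transpose_mat X * G = - (G * X)" using X unfolding u_alg_def by auto
  have YJ: "Y * J = J * Y" "transpose_mat Y * G = - (G * Y)" using Y unfolding u_alg_def by auto
  have 1: "(a \<cdot>\<^sub>m X + b \<cdot>\<^sub>m Y) * J = J * (a \<cdot>\<^sub>m X + b \<cdot>\<^sub>m Y)"
    using c unfolding sq_add_mult[OF smult_carrier_mat[OF c(1)] smult_carrier_mat[OF c(2)] J]
      sq_mult_add[OF J smult_carrier_mat[OF c(1)] smult_carrier_mat[OF c(2)]]
      smm_l[OF c(1) J] smm_l[OF c(2) J] smm_r[OF c(1) J] smm_r[OF c(2) J] XJ(1) YJ(1) by simp
  have "transpose_mat (a \<cdot>\<^sub>m X + b \<cdot>\<^sub>m Y) * G = a \<cdot>\<^sub>m (transpose_mat X * G) + b \<cdot>\<^sub>m (transpose_mat Y * G)"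
    using c by (simp add: transpose_add[of _ n n] tr_sm sq_add_mult[of _ n] smm_l[of _ n])
  also have "\<dots> = - (G * (a \<cdot>\<^sub>m X + b \<cdot>\<^sub>m Y))"
    unfolding XJ(2) YJ(2) using c by (simp add: sq_mult_add[of _ n] smm_r[of _ n]) (intro eq_matI, auto)
  finally show ?thesis using 1 c unfolding u_alg_def by auto
qed

lemma key:
  fixes A P :: "real mat" and R :: "real mat \<Rightarrow> real mat"
  assumes A: "A \<in> carrier_mat n n" and P: "P \<in> carrier_mat n n"
    and PA: "\<And>Y. Y \<in> carrier_mat n n \<Longrightarrow> Y * A = A * Y \<Longrightarrow> Y * P = P * Y"
    and lin: "linear_on (u_alg n G J) R"
    and comm: "\<And>X. X \<in> u_alg n G J \<Longrightarrow> commutator (R X) A = commutator X P"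
    and X: "X \<in> u_alg n G J"
    and cXP: "commutator X P = mu \<cdot>\<^sub>m commutator X A"
    and nz: "commutator X A \<noteq> 0\<^sub>m n n"
  shows "op_eigenvalue n (u_alg n G J) R mu"
proof (rule ccontr)
  let ?U = "u_alg n G J"
  let ?W = "{Y \<in> ?U. Y * A = A * Y}"
  define T where "T Y = R Y + (- mu) \<cdot>\<^sub>m Y" for Y
  assume ne: "\<not> op_eigenvalue n ?U R mu"
  have RU: "\<And>Y. Y \<in> ?U \<Longrightarrow> R Y \<in> ?U" using lin unfolding linear_on_def by auto
  have Rlc: "\<And>Y Z a b. Y \<in> ?U \<Longrightarrow> Z \<in> ?U \<Longrightarrow> R (a \<cdot>\<^sub>m Y + b \<cdot>\<^sub>m Z) = a \<cdot>\<^sub>m R Y + b \<cdot>\<^sub>m R Z"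
    using lin unfolding linear_on_def by auto
  have Uc: "\<And>Y. Y \<in> ?U \<Longrightarrow> Y \<in> carrier_mat n n" by (rule u_carrier)
  have one: "\<And>Y. Y \<in> carrier_mat n n \<Longrightarrow> 1 \<cdot>\<^sub>m Y = (Y :: real mat)" by (intro eq_matI) auto
  have TU: "\<And>Y. Y \<in> ?U \<Longrightarrow> T Y \<in> ?U"
  proof -
    fix Y assume Y: "Y \<in> ?U"
    have "1 \<cdot>\<^sub>m R Y + (- mu) \<cdot>\<^sub>m Y \<in> ?U" using u_lc[OF RU[OF Y] Y] .
    then show "T Y \<in> ?U" unfolding T_def one[OF Uc[OF RU[OF Y]]] .
  qed
  have Tlc: "\<And>Y Z a b. Y \<in> ?U \<Longrightarrow> Z \<in> ?U \<Longrightarrow> T (a \<cdot>\<^sub>m Y + b \<cdot>\<^sub>m Z) = a \<cdot>\<^sub>m T Y + b \<cdot>\<^sub>m T Z"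
  proof -
    fix Y Z a b assume Y: "Y \<in> ?U" and Z: "Z \<in> ?U"
    have c: "Y \<in> carrier_mat n n" "Z \<in> carrier_mat n n" "R Y \<in> carrier_mat n n" "R Z \<in> carrier_mat n n"
      using Y Z RU Uc by auto
    show "T (a \<cdot>\<^sub>m Y + b \<cdot>\<^sub>m Z) = a \<cdot>\<^sub>m T Y + b \<cdot>\<^sub>m T Z"
      unfolding T_def Rlc[OF Y Z] using c by (intro eq_matI) (auto simp: algebra_simps)
  qed
  have Tadd: "\<And>Y Z. Y \<in> ?U \<Longrightarrow> Z \<in> ?U \<Longrightarrow> T (Y + Z) = T Y + T Z"
    using Tlc[of _ _ 1 1] one TU Uc by metis
  have Tsc: "\<And>Y c. Y \<in> ?U \<Longrightarrow> T (c \<cdot>\<^sub>m Y) = c \<cdot>\<^sub>m T Y"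
  proof -
    fix Y c assume Y: "Y \<in> ?U"
    have z: "\<And>Z. Z \<in> carrier_mat n n \<Longrightarrow> c \<cdot>\<^sub>m Z + 0 \<cdot>\<^sub>m Z = c \<cdot>\<^sub>m (Z :: real mat)"
      by (intro eq_matI) auto
    have "T (c \<cdot>\<^sub>m Y + 0 \<cdot>\<^sub>m Y) = c \<cdot>\<^sub>m T Y + 0 \<cdot>\<^sub>m T Y" by (rule Tlc[OF Y Y])
    then show "T (c \<cdot>\<^sub>m Y) = c \<cdot>\<^sub>m T Y" unfolding z[OF Uc[OF Y]] z[OF Uc[OF TU[OF Y]]] .
  qed
  have Tm: "\<And>Y Z. Y \<in> ?U \<Longrightarrow> Z \<in> ?U \<Longrightarrow> T Y - T Z = T (1 \<cdot>\<^sub>m Y + (-1) \<cdot>\<^sub>m Z)"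
  proof -
    fix Y Z assume Y: "Y \<in> ?U" and Z: "Z \<in> ?U"
    show "T Y - T Z = T (1 \<cdot>\<^sub>m Y + (-1) \<cdot>\<^sub>m Z)" unfolding Tlc[OF Y Z]
      using Uc[OF TU[OF Y]] Uc[OF TU[OF Z]] by (intro eq_matI) auto
  qed
  have Tinj: "inj_on T ?U"
  proof (rule inj_onI)
    fix Y Z assume Y: "Y \<in> ?U" and Z: "Z \<in> ?U" and eq: "T Y = T Z"
    let ?D = "1 \<cdot>\<^sub>m Y + (-1) \<cdot>\<^sub>m Z"
    have D: "?D \<in> ?U" using u_lc[OF Y Z] .
    have "T ?D = 0\<^sub>m n n" unfolding Tm[OF Y Z, symmetric] eq using Uc[OF TU[OF Z]]
      by (intro eq_matI) auto
    then have "R ?D = - ((- mu) \<cdot>\<^sub>m ?D)" unfolding T_def using Uc[OF RU[OF D]] Uc[OF D]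
      by (intro sum_zero_eq) auto
    also have "\<dots> = mu \<cdot>\<^sub>m ?D" using Uc[OF D] by (intro eq_matI) auto
    finally have "R ?D = mu \<cdot>\<^sub>m ?D" .
    then have "?D = 0\<^sub>m n n" using ne D unfolding op_eigenvalue_def by blast
    then have "1 \<cdot>\<^sub>m Y = - ((-1) \<cdot>\<^sub>m Z)" using Uc[OF Y] Uc[OF Z] by (intro sum_zero_eq) auto
    moreover have "- ((-1) \<cdot>\<^sub>m Z) = Z" using Uc[OF Z] by (intro eq_matI) auto
    ultimately show "Y = Z" using Uc[OF Y] one by simp
  qed
  have RW: "\<And>Y. Y \<in> ?W \<Longrightarrow> R Y * A = A * R Y"
  proof -
    fix Y assume Y: "Y \<in> ?W"
    have c1: "commutator (R Y) A = commutator Y P" using comm Y by auto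
    have Yc: "Y \<in> carrier_mat n n" using Y Uc by auto
    have "Y * P = P * Y" using PA[OF Yc] Y by auto
    then have "commutator Y P = 0\<^sub>m n n" unfolding commutator_def using Yc P by (intro eq_matI) auto
    then have "commutator (R Y) A = 0\<^sub>m n n" unfolding c1 .
    then have e: "R Y * A - A * R Y = 0\<^sub>m n n" unfolding commutator_def .
    have RYc: "R Y \<in> carrier_mat n n" using Uc RU Y by blast
    show "R Y * A = A * R Y" by (rule diff_zero_eq[OF sq_mult[OF RYc A] sq_mult[OF A RYc] e])
  qed
  have TW: "\<forall>Y\<in>?W. T Y \<in> ?W"
  proof
    fix Y assume Y: "Y \<in> ?W"
    have c: "Y \<in> carrier_mat n n" "R Y \<in> carrier_mat n n" using Y Uc RU by auto
    have "T Y * A = R Y * A + (- mu) \<cdot>\<^sub>m (Y * A)"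
      unfolding T_def using c A by (simp add: sq_add_mult[of _ n] smm_l[of _ n])
    also have "\<dots> = A * R Y + (- mu) \<cdot>\<^sub>m (A * Y)" using RW[OF Y] Y by simp
    also have "\<dots> = A * T Y"
      unfolding T_def using c A by (simp add: sq_mult_add[of _ n] smm_r[of _ n])
    finally show "T Y \<in> ?W" using TU Y by auto
  qed
  have surj: "T ` ?W = ?W"
  proof (rule mat_inj_surj)
    show "?W \<subseteq> carrier_mat n n" using Uc by auto
    have z: "0\<^sub>m n n = 0 \<cdot>\<^sub>m X + 0 \<cdot>\<^sub>m X" using Uc[OF X] by (intro eq_matI) auto
    have "0\<^sub>m n n \<in> ?U" unfolding z by (rule u_lc[OF X X])
    then show "0\<^sub>m n n \<in> ?W" using A by auto
    show "\<forall>Y\<in>?W. \<forall>Z\<in>?W. Y + Z \<in> ?W"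
    proof (intro ballI)
      fix Y Z assume Y: "Y \<in> ?W" and Z: "Z \<in> ?W"
      have c: "Y \<in> carrier_mat n n" "Z \<in> carrier_mat n n" using Y Z Uc by auto
      have "Y + Z = 1 \<cdot>\<^sub>m Y + 1 \<cdot>\<^sub>m Z" using one c by simp
      then have "Y + Z \<in> ?U" using u_lc[of Y Z 1 1] Y Z by simp
      moreover have "(Y + Z) * A = A * (Y + Z)" using c A Y Z
        by (simp add: sq_add_mult[of _ n] sq_mult_add[of _ n])
      ultimately show "Y + Z \<in> ?W" by auto
    qed
    show "\<forall>Y\<in>?W. \<forall>c. c \<cdot>\<^sub>m Y \<in> ?W"
    proof (intro ballI allI)
      fix Y c assume Y: "Y \<in> ?W"
      have c: "Y \<in> carrier_mat n n" using Y Uc by auto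
      have z: "c \<cdot>\<^sub>m Y = c \<cdot>\<^sub>m Y + 0 \<cdot>\<^sub>m Y" using c by (intro eq_matI) auto
      have "c \<cdot>\<^sub>m Y + 0 \<cdot>\<^sub>m Y \<in> ?U" using u_lc[of Y Y c 0] Y by simp
      then have "c \<cdot>\<^sub>m Y \<in> ?U" unfolding z[symmetric] .
      moreover have "(c \<cdot>\<^sub>m Y) * A = A * (c \<cdot>\<^sub>m Y)" using c A Y
        by (simp add: smm_l[of _ n] smm_r[of _ n])
      ultimately show "c \<cdot>\<^sub>m Y \<in> ?W" by auto
    qed
    show "\<forall>Y\<in>?W. T Y \<in> ?W" by (rule TW)
    show "\<forall>Y\<in>?W. \<forall>Z\<in>?W. T (Y + Z) = T Y + T Z" using Tadd by auto
    show "\<forall>Y\<in>?W. \<forall>c. T (c \<cdot>\<^sub>m Y) = c \<cdot>\<^sub>m T Y" using Tsc by auto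
    show "inj_on T ?W" using Tinj by (rule inj_on_subset) auto
  qed
  have cX: "X \<in> carrier_mat n n" "R X \<in> carrier_mat n n" using Uc X RU by auto
  have TXW: "T X \<in> ?W"
  proof -
    have "commutator (R X) A = mu \<cdot>\<^sub>m commutator X A" using comm[OF X] cXP by simp
    then have e: "R X * A - A * R X = mu \<cdot>\<^sub>m (X * A - A * X)" unfolding commutator_def .
    have "T X * A - A * T X = (R X * A - A * R X) + (- mu) \<cdot>\<^sub>m (X * A - A * X)"
      unfolding T_def using cX A
      by (simp add: sq_add_mult[of _ n] sq_mult_add[of _ n] smm_l[of _ n] smm_r[of _ n]) (intro eq_matI, auto simp: algebra_simps)
    also have "\<dots> = 0\<^sub>m n n" unfolding e using cX A by (intro eq_matI) auto
    finally have "T X * A - A * T X = 0\<^sub>m n n" .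
    then have "T X * A = A * T X"
      by (rule diff_zero_eq[OF sq_mult[OF Uc[OF TU[OF X]] A] sq_mult[OF A Uc[OF TU[OF X]]]])
    then show ?thesis using TU[OF X] by auto
  qed
  then have "T X \<in> T ` ?W" by (simp only: surj)
  then obtain Y where Y: "T X = T Y" "Y \<in> ?W" by (rule imageE)
  have YU: "Y \<in> ?U" and YA: "Y * A = A * Y" using Y(2) by auto
  have "Y = X" using inj_onD[OF Tinj Y(1)[symmetric] YU X] .
  then have "X * A = A * X" using YA by simp
  then have "commutator X A = 0\<^sub>m n n" unfolding commutator_def using cX A by (intro eq_matI) auto
  then show False using nz by simp
qed

end

lemma sum_min12: "sum_list (map (\<lambda>x. min 1 x) L) \<le> sum_list (map (\<lambda>x. min 2 x) (L :: nat list))"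
  by (induction L) auto

lemma sum_min12_strict: "k \<in> set L \<Longrightarrow> k \<ge> 2 \<Longrightarrow>
  sum_list (map (\<lambda>x. min 1 x) L) < sum_list (map (\<lambda>x. min 2 x) (L :: nat list))"
proof (induction L)
  case Nil then show ?case by simp
next
  case (Cons a L)
  show ?case
  proof (cases "a = k")
    case True
    then show ?thesis using Cons(3) sum_min12[of L] by auto
  next
    case False
    then have "k \<in> set L" using Cons(2) by simp
    then show ?thesis using Cons by auto
  qed
qed

definition cpl :: "nat \<Rightarrow> real vec \<Rightarrow> real vec \<Rightarrow> complex vec" where
  "cpl n u v = vec n (\<lambda>i. complex_of_real (u $ i) + \<i> * complex_of_real (v $ i))"

lemma cpl_mult: assumes B: "B \<in> carrier_mat n n" and u: "u \<in> carrier_vec n" and v: "v \<in> carrier_vec n"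
  shows "map_mat complex_of_real B *\<^sub>v cpl n u v = cpl n (B *\<^sub>v u) (B *\<^sub>v v)"
proof (rule eq_vecI)
  fix i assume "i < dim_vec (cpl n (B *\<^sub>v u) (B *\<^sub>v v))"
  then have i: "i < n" by (simp add: cpl_def)
  have "(map_mat complex_of_real B *\<^sub>v cpl n u v) $ i
      = (\<Sum>j = 0..<n. complex_of_real (B $$ (i,j)) * (complex_of_real (u $ j) + \<i> * complex_of_real (v $ j)))"
    using i B u v by (simp add: cpl_def scalar_prod_def)
  also have "\<dots> = complex_of_real (\<Sum>j = 0..<n. B $$ (i,j) * u $ j) + \<i> * complex_of_real (\<Sum>j = 0..<n. B $$ (i,j) * v $ j)"
    by (simp add: sum.distrib sum_distrib_left algebra_simps)
  also have "\<dots> = cpl n (B *\<^sub>v u) (B *\<^sub>v v) $ i"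
    using i B u v by (simp add: cpl_def scalar_prod_def)
  finally show "(map_mat complex_of_real B *\<^sub>v cpl n u v) $ i = cpl n (B *\<^sub>v u) (B *\<^sub>v v) $ i" .
qed (use B in \<open>simp add: cpl_def\<close>)

lemma cpl_zero: "u \<in> carrier_vec n \<Longrightarrow> v \<in> carrier_vec n \<Longrightarrow>
  cpl n u v = 0\<^sub>v n \<longleftrightarrow> u = 0\<^sub>v n \<and> v = 0\<^sub>v n"
proof
  assume u: "u \<in> carrier_vec n" and v: "v \<in> carrier_vec n" and z: "cpl n u v = 0\<^sub>v n"
  have e: "\<And>i. i < n \<Longrightarrow> complex_of_real (u $ i) + \<i> * complex_of_real (v $ i) = 0"
  proof -
    fix i assume i: "i < n"
    have "cpl n u v $ i = 0\<^sub>v n $ i" using z by simp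
    then show "complex_of_real (u $ i) + \<i> * complex_of_real (v $ i) = 0" using i by (simp add: cpl_def)
  qed
  have "\<And>i. i < n \<Longrightarrow> u $ i = 0 \<and> v $ i = 0"
  proof -
    fix i assume i: "i < n"
    have "Re (complex_of_real (u $ i) + \<i> * complex_of_real (v $ i)) = 0"
      "Im (complex_of_real (u $ i) + \<i> * complex_of_real (v $ i)) = 0" using e[OF i] by simp_all
    then show "u $ i = 0 \<and> v $ i = 0" by simp
  qed
  then show "u = 0\<^sub>v n \<and> v = 0\<^sub>v n" using u v by (auto intro!: eq_vecI)
next
  assume "u \<in> carrier_vec n" "v \<in> carrier_vec n" "u = 0\<^sub>v n \<and> v = 0\<^sub>v n"
  then show "cpl n u v = 0\<^sub>v n" by (auto simp: cpl_def intro!: eq_vecI)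
qed

lemma cpl_surj: "x \<in> carrier_vec n \<Longrightarrow> x = cpl n (map_vec Re x) (map_vec Im x)"
  by (rule eq_vecI) (auto simp: cpl_def complex_eq_iff)

lemma jordan_vecs:
  fixes A :: "real mat"
  assumes A: "A \<in> carrier_mat n n" and jb: "has_nontrivial_jordan_block A l"
  shows "\<exists>v w. v \<in> carrier_vec n \<and> w \<in> carrier_vec n \<and> w \<noteq> 0\<^sub>v n \<and>
     A *\<^sub>v v = l \<cdot>\<^sub>v v + w \<and> A *\<^sub>v w = l \<cdot>\<^sub>v w"
proof -
  let ?Ac = "map_mat complex_of_real A"
  let ?cl = "complex_of_real l"
  obtain n_as k where jnf: "jordan_nf ?Ac n_as" and k: "(k, ?cl) \<in> set n_as" "k \<ge> 2"
    using jb unfolding has_nontrivial_jordan_block_def by blast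
  let ?L = "map fst [(m, e)\<leftarrow>n_as . e = ?cl]"
  have kL: "k \<in> set ?L" using k(1) by force
  have "dim_gen_eigenspace ?Ac ?cl 1 < dim_gen_eigenspace ?Ac ?cl 2"
    unfolding dim_gen_eigenspace[OF jnf] using sum_min12_strict[OF kL k(2)] by simp
  define Nr where "Nr = char_matrix A l"
  have Nr: "Nr \<in> carrier_mat n n" unfolding Nr_def using A by simp
  define N where "N = map_mat complex_of_real Nr"
  have N: "N \<in> carrier_mat n n" unfolding N_def using Nr by simp
  have NAc: "char_matrix ?Ac ?cl = N"
    unfolding N_def Nr_def char_matrix_def using A by (intro eq_matI) auto
  have p1: "char_matrix ?Ac ?cl ^\<^sub>m 1 = N" unfolding NAc using N by simp
  have p2: "char_matrix ?Ac ?cl ^\<^sub>m 2 = N * N" unfolding NAc using N by (simp add: numeral_2_eq_2)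
  have dlt: "kernel_dim N < kernel_dim (N * N)"
    using \<open>dim_gen_eigenspace ?Ac ?cl 1 < dim_gen_eigenspace ?Ac ?cl 2\<close>
    unfolding dim_gen_eigenspace_def p1 p2 .
  have "\<not> mat_kernel (N * N) \<subseteq> mat_kernel N"
  proof
    assume sub: "mat_kernel (N * N) \<subseteq> mat_kernel N"
    have "mat_kernel N \<subseteq> mat_kernel (N * N)" by (rule mat_kernel_mult_subset[OF N N])
    then have eq: "mat_kernel (N * N) = mat_kernel N" using sub by blast
    have "kernel_dim (N * N) = kernel_dim N"
      unfolding kernel_dim_def eq using N by simp
    then show False using dlt by simp
  qed
  then obtain x where x1: "x \<in> mat_kernel (N * N)" and x2: "x \<notin> mat_kernel N" by blast
  have xc: "x \<in> carrier_vec n" using x1 N by (auto simp: mat_kernel_def)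
  have NNx: "N *\<^sub>v (N *\<^sub>v x) = 0\<^sub>v n"
  proof -
    have "(N * N) *\<^sub>v x = 0\<^sub>v n" using x1 N by (auto simp: mat_kernel_def)
    then show ?thesis using N xc by simp
  qed
  have Nx: "N *\<^sub>v x \<noteq> 0\<^sub>v n" using x2 xc N by (auto simp: mat_kernel_def)
  define xr where "xr = map_vec Re x"
  define xi where "xi = map_vec Im x"
  have xrc: "xr \<in> carrier_vec n" "xi \<in> carrier_vec n" unfolding xr_def xi_def using xc by auto
  have xe: "x = cpl n xr xi" unfolding xr_def xi_def by (rule cpl_surj[OF xc])
  have N1: "N *\<^sub>v x = cpl n (Nr *\<^sub>v xr) (Nr *\<^sub>v xi)" unfolding xe N_def by (rule cpl_mult[OF Nr xrc])
  have N2: "N *\<^sub>v (N *\<^sub>v x) = cpl n (Nr *\<^sub>v (Nr *\<^sub>v xr)) (Nr *\<^sub>v (Nr *\<^sub>v xi))"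
  proof -
    have "N *\<^sub>v (N *\<^sub>v x) = N *\<^sub>v cpl n (Nr *\<^sub>v xr) (Nr *\<^sub>v xi)" by (simp only: N1)
    also have "\<dots> = cpl n (Nr *\<^sub>v (Nr *\<^sub>v xr)) (Nr *\<^sub>v (Nr *\<^sub>v xi))"
      unfolding N_def by (rule cpl_mult[OF Nr]) (use Nr xrc in auto)
    finally show ?thesis .
  qed
  have z2: "Nr *\<^sub>v (Nr *\<^sub>v xr) = 0\<^sub>v n" "Nr *\<^sub>v (Nr *\<^sub>v xi) = 0\<^sub>v n"
    using NNx unfolding N2 using cpl_zero[of "Nr *\<^sub>v (Nr *\<^sub>v xr)" n "Nr *\<^sub>v (Nr *\<^sub>v xi)"] Nr xrc by auto
  have z1: "Nr *\<^sub>v xr \<noteq> 0\<^sub>v n \<or> Nr *\<^sub>v xi \<noteq> 0\<^sub>v n"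
    using Nx unfolding N1 using cpl_zero[of "Nr *\<^sub>v xr" n "Nr *\<^sub>v xi"] Nr xrc by auto
  obtain y where y: "y \<in> carrier_vec n" "Nr *\<^sub>v y \<noteq> 0\<^sub>v n" "Nr *\<^sub>v (Nr *\<^sub>v y) = 0\<^sub>v n"
    using z1 z2 xrc by blast
  have Ay: "A *\<^sub>v u = l \<cdot>\<^sub>v u + Nr *\<^sub>v u" if u: "u \<in> carrier_vec n" for u
  proof -
    have dr: "dim_row A = n" using A by simp
    have sv: "((- l) \<cdot>\<^sub>m 1\<^sub>m n) *\<^sub>v u = (- l) \<cdot>\<^sub>v u"
    proof -
      have gen: "\<And>B. B \<in> carrier_mat n n \<Longrightarrow> ((- l) \<cdot>\<^sub>m B) *\<^sub>v u = (- l) \<cdot>\<^sub>v (B *\<^sub>v u)"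
        using u by (intro eq_vecI) (auto simp: scalar_prod_def sum_distrib_left mult.assoc)
      have "((- l) \<cdot>\<^sub>m 1\<^sub>m n) *\<^sub>v u = (- l) \<cdot>\<^sub>v (1\<^sub>m n *\<^sub>v u)" by (rule gen) simp
      then show ?thesis using u by simp
    qed
    have "Nr *\<^sub>v u = A *\<^sub>v u + (- l) \<cdot>\<^sub>v u"
      unfolding Nr_def char_matrix_def dr
      using add_mult_distrib_mat_vec[OF A smult_carrier_mat[OF one_carrier_mat] u] sv by simp
    then show ?thesis using A u by (intro eq_vecI) auto
  qed
  define w where "w = Nr *\<^sub>v y"
  have wc: "w \<in> carrier_vec n" unfolding w_def using Nr y by simp
  have "A *\<^sub>v w = l \<cdot>\<^sub>v w" unfolding Ay[OF wc] using y(3) wc unfolding w_def by simp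
  moreover have "A *\<^sub>v y = l \<cdot>\<^sub>v y + w" unfolding w_def by (rule Ay[OF y(1)])
  ultimately show ?thesis using y wc unfolding w_def by blast
qed



context phs begin

lemma S_nz: assumes H: "herm H" and a: "a \<in> carrier_vec n" "a \<noteq> 0\<^sub>v n" and b: "b \<in> carrier_vec n" "b \<noteq> 0\<^sub>v n"
  and Ha: "H *\<^sub>v a = ha \<cdot>\<^sub>v a" and Hb: "H *\<^sub>v b = hb \<cdot>\<^sub>v b" and hab: "ha \<noteq> hb"
  shows "M a b + M b a \<noteq> 0\<^sub>m n n"
proof
  assume S0: "M a b + M b a = 0\<^sub>m n n"
  have H': "H \<in> carrier_mat n n" "H * J = J * H" using H unfolding herm_def by auto
  have c: "M a b \<in> carrier_mat n n" "M b a \<in> carrier_mat n n" using a b by auto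
  have "H * (M a b + M b a) = hb \<cdot>\<^sub>m M a b + ha \<cdot>\<^sub>m M b a"
    unfolding sq_mult_add[OF H'(1) c] M_left[OF H' a(1) b(1)] M_left[OF H' b(1) a(1)] Ha Hb
      M_sm_r[OF a(1) b(1)] M_sm_r[OF b(1) a(1)] ..
  moreover have "H * (M a b + M b a) = 0\<^sub>m n n" unfolding S0 using H'(1) by (intro eq_matI) auto
  ultimately have e2: "hb \<cdot>\<^sub>m M a b + ha \<cdot>\<^sub>m M b a = 0\<^sub>m n n" by simp
  have "M a b = 0\<^sub>m n n"
  proof (rule eq_matI)
    fix i j assume "i < dim_row (0\<^sub>m n n :: real mat)" "j < dim_col (0\<^sub>m n n :: real mat)"
    then have ij: "i < n" "j < n" by auto
    have dM: "dim_row (M a b) = n" "dim_col (M a b) = n" "dim_row (M b a) = n" "dim_col (M b a) = n"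
      using c by auto
    have q1: "M a b $$ (i,j) + M b a $$ (i,j) = 0"
      using arg_cong[OF S0, of "\<lambda>Z. Z $$ (i,j)"] ij dM by simp
    have q2: "hb * M a b $$ (i,j) + ha * M b a $$ (i,j) = 0"
      using arg_cong[OF e2, of "\<lambda>Z. Z $$ (i,j)"] ij dM by simp
    have "(hb - ha) * M a b $$ (i,j) = (hb * M a b $$ (i,j) + ha * M b a $$ (i,j)) - ha * (M a b $$ (i,j) + M b a $$ (i,j))"
      by (simp add: algebra_simps)
    also have "\<dots> = 0" using q1 q2 by simp
    finally have "(hb - ha) * M a b $$ (i,j) = 0" .
    then show "M a b $$ (i,j) = 0\<^sub>m n n $$ (i,j)" using hab ij by simp
  qed (use c in auto)
  then show False using M_nz[OF a b] by simp
qed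

end

theorem propositionA3:
  fixes n :: nat and G J A :: "real mat" and p :: "real poly"
    and R :: "real mat \<Rightarrow> real mat"
  assumes "pseudo_hermitian n G J"
    and "hermitian_endo n G J A"
    and "linear_on (u_alg n G J) R"
    and "\<And>X. X \<in> u_alg n G J \<Longrightarrow>
           commutator (R X) A = commutator X (poly_mat n p A)"
  shows "(\<forall>li lj. eigenvalue A li \<and> eigenvalue A lj \<and> li \<noteq> lj \<longrightarrow>
            op_eigenvalue n (u_alg n G J) R ((poly p li - poly p lj) / (li - lj)))
       \<and> (\<forall>li. has_nontrivial_jordan_block A li \<longrightarrow>
            op_eigenvalue n (u_alg n G J) R (poly (pderiv p) li))"
proof -
  interpret phs n G J using assms(1) by unfold_locales
  have A: "A \<in> carrier_mat n n" and AG: "transpose_mat A * G = G * A" and AJ: "A * J = J * A"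
    using assms(2) unfolding hermitian_endo_def by auto
  define P where "P = poly_mat n p A"
  have P: "P \<in> carrier_mat n n" unfolding P_def using A by (rule pm_carrier)
  have hA: "herm A" unfolding herm_def using A AG AJ by auto
  have hP: "herm P" unfolding herm_def P_def
    using pm_carrier[OF A] pm_comm[OF A J AJ[symmetric], of p] pm_herm[OF A G AG, of p] by auto
  have PA: "\<And>Y. Y \<in> carrier_mat n n \<Longrightarrow> Y * A = A * Y \<Longrightarrow> Y * P = P * Y"
    unfolding P_def by (rule pm_comm[OF A])
  have comm: "\<And>X. X \<in> u_alg n G J \<Longrightarrow> commutator (R X) A = commutator X P"
    unfolding P_def by (rule assms(4))
  have keyl: "op_eigenvalue n (u_alg n G J) R mu"
    if XU: "X \<in> u_alg n G J" and cXP: "commutator X P = mu \<cdot>\<^sub>m commutator X A"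
      and nz: "commutator X A \<noteq> 0\<^sub>m n n" for X mu
  proof (rule key[where A=A and P=P and R=R and X=X])
    show "A \<in> carrier_mat n n" by (rule A)
    show "P \<in> carrier_mat n n" by (rule P)
    show "\<And>Y. Y \<in> carrier_mat n n \<Longrightarrow> Y * A = A * Y \<Longrightarrow> Y * P = P * Y" by (rule PA)
    show "linear_on (u_alg n G J) R" by (rule assms(3))
    show "\<And>X. X \<in> u_alg n G J \<Longrightarrow> commutator (R X) A = commutator X P" by (rule comm)
  qed (rule XU, rule cXP, rule nz)
  have part1: "\<forall>li lj. eigenvalue A li \<and> eigenvalue A lj \<and> li \<noteq> lj \<longrightarrow>
            op_eigenvalue n (u_alg n G J) R ((poly p li - poly p lj) / (li - lj))"
  proof (intro allI impI)
    fix li lj assume h: "eigenvalue A li \<and> eigenvalue A lj \<and> li \<noteq> lj"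
    have dr: "dim_row A = n" using A by auto
    obtain vi where vi: "vi \<in> carrier_vec n" "vi \<noteq> 0\<^sub>v n" "A *\<^sub>v vi = li \<cdot>\<^sub>v vi"
      using h unfolding eigenvalue_def eigenvector_def dr by auto
    obtain vj where vj: "vj \<in> carrier_vec n" "vj \<noteq> 0\<^sub>v n" "A *\<^sub>v vj = lj \<cdot>\<^sub>v vj"
      using h unfolding eigenvalue_def eigenvector_def dr by auto
    have ne: "li \<noteq> lj" using h by simp
    define X where "X = M vj vi - M vi vj"
    define S where "S = M vj vi + M vi vj"
    have Sc: "S \<in> carrier_mat n n" unfolding S_def using vi vj by simp
    have XU: "X \<in> u_alg n G J" unfolding X_def by (rule X_u[OF vj(1) vi(1)])
    have Pvi: "P *\<^sub>v vi = poly p li \<cdot>\<^sub>v vi" unfolding P_def by (rule pm_eig[OF A vi(1) vi(3)])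
    have Pvj: "P *\<^sub>v vj = poly p lj \<cdot>\<^sub>v vj" unfolding P_def by (rule pm_eig[OF A vj(1) vj(3)])
    have cP: "commutator X P = (poly p lj - poly p li) \<cdot>\<^sub>m S"
      unfolding X_def S_def by (rule comm1[OF hP vj(1) vi(1) Pvj Pvi])
    have cA: "commutator X A = (lj - li) \<cdot>\<^sub>m S"
      unfolding X_def S_def by (rule comm1[OF hA vj(1) vi(1) vj(3) vi(3)])
    have Snz: "S \<noteq> 0\<^sub>m n n" unfolding S_def using S_nz[OF hA vj(1,2) vi(1,2) vj(3) vi(3)] ne by auto
    have nz: "commutator X A \<noteq> 0\<^sub>m n n"
    proof
      assume "commutator X A = 0\<^sub>m n n"
      then have e: "(lj - li) \<cdot>\<^sub>m S = 0\<^sub>m n n" unfolding cA .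
      have "S = 0\<^sub>m n n"
      proof (rule eq_matI)
        fix i j assume "i < dim_row (0\<^sub>m n n :: real mat)" "j < dim_col (0\<^sub>m n n :: real mat)"
        then have ij: "i < n" "j < n" by auto
        have "(lj - li) * S $$ (i,j) = 0" using arg_cong[OF e, of "\<lambda>Z. Z $$ (i,j)"] ij Sc by simp
        then show "S $$ (i,j) = 0\<^sub>m n n $$ (i,j)" using ne ij by simp
      qed (use Sc in auto)
      then show False using Snz by simp
    qed
    define mu where "mu = (poly p li - poly p lj) / (li - lj)"
    have mu: "mu * (lj - li) = poly p lj - poly p li"
      unfolding mu_def using ne by (simp add: field_simps)
    have "commutator X P = mu \<cdot>\<^sub>m commutator X A"
      unfolding cP cA using Sc mu by (intro eq_matI) (auto simp: mult.assoc[symmetric])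
    then show "op_eigenvalue n (u_alg n G J) R ((poly p li - poly p lj) / (li - lj))"
      using keyl[OF XU _ nz] unfolding mu_def by simp
  qed
  have part2: "\<forall>li. has_nontrivial_jordan_block A li \<longrightarrow>
            op_eigenvalue n (u_alg n G J) R (poly (pderiv p) li)"
  proof (intro allI impI)
    fix l assume jb: "has_nontrivial_jordan_block A l"
    obtain v w where vw: "v \<in> carrier_vec n" "w \<in> carrier_vec n" "w \<noteq> 0\<^sub>v n"
      "A *\<^sub>v v = l \<cdot>\<^sub>v v + w" "A *\<^sub>v w = l \<cdot>\<^sub>v w"
      using jordan_vecs[OF A jb] by blast
    have vnz: "v \<noteq> 0\<^sub>v n"
    proof
      assume v0: "v = 0\<^sub>v n"
      have "A *\<^sub>v v = 0\<^sub>v n" unfolding v0 using A by (intro eq_vecI) (auto simp: scalar_prod_def)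
      then have "l \<cdot>\<^sub>v v + w = 0\<^sub>v n" using vw(4) by simp
      then have e: "l \<cdot>\<^sub>v 0\<^sub>v n + w = 0\<^sub>v n" unfolding v0 .
      have "w = 0\<^sub>v n"
      proof (rule eq_vecI)
        fix i assume "i < dim_vec (0\<^sub>v n :: real vec)"
        then have i: "i < n" by simp
        have "(l \<cdot>\<^sub>v 0\<^sub>v n + w) $ i = 0\<^sub>v n $ i" using e by simp
        then show "w $ i = 0\<^sub>v n $ i" using i vw(2) by simp
      qed (use vw(2) in simp)
      then show False using vw(3) by simp
    qed
    define X where "X = M w v - M v w"
    have XU: "X \<in> u_alg n G J" unfolding X_def by (rule X_u[OF vw(2) vw(1)])
    have Av1: "A *\<^sub>v v = l \<cdot>\<^sub>v v + 1 \<cdot>\<^sub>v w" using vw(4) by simp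
    have Pw: "P *\<^sub>v w = poly p l \<cdot>\<^sub>v w" unfolding P_def by (rule pm_eig[OF A vw(2) vw(5)])
    have Pv: "P *\<^sub>v v = poly p l \<cdot>\<^sub>v v + poly (pderiv p) l \<cdot>\<^sub>v w"
      unfolding P_def by (rule pm_jor[OF A vw(1) vw(2) vw(4) vw(5)])
    have cP: "commutator X P = (- 2 * poly (pderiv p) l) \<cdot>\<^sub>m M w w"
      unfolding X_def by (rule comm2[OF hP vw(2) vw(1) Pw Pv])
    have cA: "commutator X A = (- 2 * 1) \<cdot>\<^sub>m M w w"
      unfolding X_def by (rule comm2[OF hA vw(2) vw(1) vw(5) Av1])
    have Mc: "M w w \<in> carrier_mat n n" using vw by simp
    have Mnz: "M w w \<noteq> 0\<^sub>m n n" by (rule M_nz[OF vw(2,3) vw(2,3)])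
    have nz: "commutator X A \<noteq> 0\<^sub>m n n"
    proof
      assume "commutator X A = 0\<^sub>m n n"
      then have e: "(- 2 * 1) \<cdot>\<^sub>m M w w = 0\<^sub>m n n" unfolding cA .
      have "M w w = 0\<^sub>m n n"
      proof (rule eq_matI)
        fix i j assume "i < dim_row (0\<^sub>m n n :: real mat)" "j < dim_col (0\<^sub>m n n :: real mat)"
        then have ij: "i < n" "j < n" by auto
        have "(- 2 * 1) * M w w $$ (i,j) = 0" using arg_cong[OF e, of "\<lambda>Z. Z $$ (i,j)"] ij Mc by simp
        then show "M w w $$ (i,j) = 0\<^sub>m n n $$ (i,j)" using ij by simp
      qed (use Mc in auto)
      then show False using Mnz by simp
    qed
    have "commutator X P = poly (pderiv p) l \<cdot>\<^sub>m commutator X A"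
      unfolding cP cA using Mc by (intro eq_matI) auto
    then show "op_eigenvalue n (u_alg n G J) R (poly (pderiv p) l)"
      using keyl[OF XU _ nz] by simp
  qed
  show ?thesis using part1 part2 by blast
qed

end
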